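(* Assume (H1)–(H5) and $\mathbb A_n=\mathbb T_n$. Then $\lim_{n\to\infty}\mathbb E[R_2(n)]=0$.
   Context: Let $d\ge1$, $S=\mathbb R^d$ with Borel $\sigma$-field. Binary tree: $\mathbb G_0=\mathbb T_0=\{\emptyset\}$, $\mathbb G_k=\{0,1\}^k$ (so $|\mathbb G_k|=2^k$), $\mathbb T_k=\bigcup_{r\le k}\mathbb G_r$, $\mathbb T=\bigcup_{r\ge0}\mathbb G_r$. Given a probability kernel $\mathcal P$ from $S$ to $S^2$, for $g:S^3\to\mathbb R$ set $\mathcal Pg(y)=\int g(y,y_0,y_1)\mathcal P(y,dy_0,dy_1)$ and for $h:S^2\to\mathbb R$ set $\mathcal Ph(y)=\int h(y_0,y_1)\mathcal P(y,dy_0,dy_1)$. A bifurcating Markov chain (BMC) with initial law $\nu$ and kernel $\mathcal P$ is a process $X=(X_i)_{i\in\mathbb T}$ with values in $S$ such that $X_\emptyset\sim\nu$ and for all $k\ge0$ and bounded measurable $g_i:S^3\to\mathbb R$, $\mathbb E[\prod_{i\in\mathbb G_k}g_i(X_i,X_{i0},X_{i1})\mid\sigma(X_j;j\in\mathbb T_k)]=\prod_{i\in\mathbb G_k}\mathcal Pg_i(X_i)$. Let $P_0(y,A)=\mathcal P(y,A\times S)$, $P_1(y,A)=\mathcal P(y,S\times A)$, $\mathcal Q=\frac12(P_0+P_1)$, $\mathcal Q^n$ its $n$-th iterate, $\langle\lambda,f\rangle=\int f\,d\lambda$. $X$ is a BMC with kernel $\mathcal P$ and initial law $\nu$ satisfying: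 (H1) There is a set $F$ of real measurable functions on $S$ which is a vector space containing the constants, with $f^2\in F$ for $f\in F$, $F\subset L^1(\nu)$, and for $f_0,f_1\in F$, $f_0\otimes f_1$ is $\mathcal P(y,\cdot)$-integrable for every $y$ and $\mathcal P(f_0\otimes f_1)\in F$. (H2) There is a probability measure $\mu$ on $S$ with $F\subset L^1(\mu)$ such that for every $f\in F$, $\mathcal Q^nf\to\langle\mu,f\rangle$ pointwise and there is $g\in F$ with $|\mathcal Q^nf|\le g$ for all $n$; moreover there exist $V\in F$ with $V\ge1$, $\alpha\in(0,1)$ and $M<\infty$ such that $|\mathcal Q^nf-\langle\mu,f\rangle|\le M\alpha^nV$ for all $n\in\mathbb N$ and all measurable $f$ with $|f|\le V$. (H3) $\mathcal P(y,dy_0,dy_1)$ has a Lebesgue density $\mathcal P(y,y_0,y_1)$; then $\mathcal Q$ has density $\mathcal Q(y,z)=\frac12\int(\mathcal P(y,z,w)+\mathcal P(y,w,z))dw$, $\mu$ has a Lebesgue density denoted $\mu(\cdot)$, and $\mu^{\triangle}(y,y_0,y_1)=\mu(y)\mathcal P(y,y_0,y_1)$. (H4) $C_0=\sup_{y,y_0,y_1\in S}(\mu(y)+\mathcal Q(y,y_0)+\mathcal P(y,y_0,y_1))<\infty$. (H5) $h_n=2^{-n\gamma}$ for some $\gamma\in(0,1/(3d))$ with $2\alpha^2<2^{3d\gamma}$; $K_0:\mathbb R^d\to\mathbb R$ is bounded, integrable (hence square integrable) with $\int K_0=1$. Let $K=K_0\otimes K_0\otimes K_0$ on $\mathbb R^{3d}$.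 Fix $(x,x_0,x_1)\in S^3$ with $\mu(x)>0$. Define $f_n(y,y_0,y_1)=h_n^{-3d/2}K(h_n^{-1}(x-y),h_n^{-1}(x_0-y_0),h_n^{-1}(x_1-y_1))$ and $\tilde f_n=f_n-\langle\mu,\mathcal Pf_n\rangle$. Let $(p_n)$ be a non-decreasing sequence of positive integers with $p_n<n$, $p_n/n\to1$, and $n-p_n-\lambda\log n\to+\infty$ for every $\lambda>0$; write $p=p_n$. Define $R_2(n)=|\mathbb G_n|^{-1}\sum_{i\in\mathbb G_{n-p}}\Big(\sum_{k=0}^p2^{p-k}\,\mathcal Q^{p-k}\mathcal P\tilde f_n(X_i)\Big)^2$. *)

theory Defs
  imports "HOL-Probability.Probability"
begin

section \<open>Binary tree indexing: nodes are bool lists, i0 = i @ [False], i1 = i @ [True]\<close>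

definition Gen :: "nat \<Rightarrow> bool list set" where
  "Gen k = {i. length i = k}"

definition Tr :: "nat \<Rightarrow> bool list set" where
  "Tr k = {i. length i \<le> k}"

definition Pmeas :: "('a::euclidean_space \<Rightarrow> 'a \<Rightarrow> 'a \<Rightarrow> real) \<Rightarrow> 'a \<Rightarrow> ('a \<times> 'a) measure" where
  "Pmeas p y = density lborel (\<lambda>z. ennreal (p y (fst z) (snd z)))"

definition Pk :: "('a::euclidean_space \<Rightarrow> 'a \<Rightarrow> 'a \<Rightarrow> real) \<Rightarrow> ('a \<Rightarrow> 'a \<Rightarrow> 'a \<Rightarrow> real) \<Rightarrow> 'a \<Rightarrow> real" where
  "Pk p g y = (\<integral>z. g y (fst z) (snd z) \<partial>Pmeas p y)"

definition Qop :: "('a::euclidean_space \<Rightarrow> 'a \<Rightarrow> 'a \<Rightarrow> real) \<Rightarrow> ('a \<Rightarrow> real) \<Rightarrow> 'a \<Rightarrow> real" where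
  "Qop p f y = (Pk p (\<lambda>_ a _. f a) y + Pk p (\<lambda>_ _ b. f b) y) / 2"

definition qdens :: "('a::euclidean_space \<Rightarrow> 'a \<Rightarrow> 'a \<Rightarrow> real) \<Rightarrow> 'a \<Rightarrow> 'a \<Rightarrow> real" where
  "qdens p y z = (1/2) * (\<integral>w. p y z w + p y w z \<partial>lborel)"

definition mumeas :: "('a::euclidean_space \<Rightarrow> real) \<Rightarrow> 'a measure" where
  "mumeas mu = density lborel (\<lambda>y. ennreal (mu y))"

definition pairing :: "('a::euclidean_space \<Rightarrow> real) \<Rightarrow> ('a \<Rightarrow> real) \<Rightarrow> real" where
  "pairing mu f = (\<integral>y. f y \<partial>mumeas mu)"

text \<open>sigma(X_j; j in T_k), as a sub-sigma-algebra of M\<close>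
definition tree_sigma :: "'w measure \<Rightarrow> (bool list \<Rightarrow> 'w \<Rightarrow> 'a::euclidean_space) \<Rightarrow> nat \<Rightarrow> 'w measure" where
  "tree_sigma M X k = vimage_algebra (space M) (\<lambda>\<omega>. restrict (\<lambda>j. X j \<omega>) (Tr k)) (PiM (Tr k) (\<lambda>_. borel))"

definition BMC :: "'w measure \<Rightarrow> (bool list \<Rightarrow> 'w \<Rightarrow> 'a::euclidean_space) \<Rightarrow> ('a \<Rightarrow> 'a \<Rightarrow> 'a \<Rightarrow> real) \<Rightarrow> 'a measure \<Rightarrow> bool" where
  "BMC M X p \<nu> \<longleftrightarrow> prob_space M \<and> (\<forall>i. X i \<in> borel_measurable M) \<and> distr M borel (X []) = \<nu> \<and>
     (\<forall>k (g :: bool list \<Rightarrow> 'a \<Rightarrow> 'a \<Rightarrow> 'a \<Rightarrow> real).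
        (\<forall>i\<in>Gen k. (\<lambda>(a, b, c). g i a b c) \<in> borel_measurable borel \<and>
                    bounded (range (\<lambda>(a, b, c). g i a b c))) \<longrightarrow>
        (AE \<omega> in M. real_cond_exp M (tree_sigma M X k)
              (\<lambda>\<omega>. \<Prod>i\<in>Gen k. g i (X i \<omega>) (X (i @ [False]) \<omega>) (X (i @ [True]) \<omega>)) \<omega>
            = (\<Prod>i\<in>Gen k. Pk p (g i) (X i \<omega>))))"

definition hn :: "real \<Rightarrow> nat \<Rightarrow> real" where
  "hn \<gamma> n = 2 powr (- (real n * \<gamma>))"

definition fn :: "('a::euclidean_space \<Rightarrow> real) \<Rightarrow> real \<Rightarrow> 'a \<Rightarrow> 'a \<Rightarrow> 'a \<Rightarrow> nat \<Rightarrow> 'a \<Rightarrow> 'a \<Rightarrow> 'a \<Rightarrow> real" where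
  "fn K0 \<gamma> x x0 x1 n y y0 y1 =
     hn \<gamma> n powr (- (3 * real DIM('a)) / 2) *
     (K0 (inverse (hn \<gamma> n) *\<^sub>R (x - y)) * K0 (inverse (hn \<gamma> n) *\<^sub>R (x0 - y0)) *
      K0 (inverse (hn \<gamma> n) *\<^sub>R (x1 - y1)))"

definition ftil :: "('a::euclidean_space \<Rightarrow> 'a \<Rightarrow> 'a \<Rightarrow> real) \<Rightarrow> ('a \<Rightarrow> real) \<Rightarrow> ('a \<Rightarrow> real) \<Rightarrow> real \<Rightarrow> 'a \<Rightarrow> 'a \<Rightarrow> 'a \<Rightarrow> nat \<Rightarrow> 'a \<Rightarrow> 'a \<Rightarrow> 'a \<Rightarrow> real" where
  "ftil p mu K0 \<gamma> x x0 x1 n y y0 y1 =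
     fn K0 \<gamma> x x0 x1 n y y0 y1 - pairing mu (Pk p (fn K0 \<gamma> x x0 x1 n))"

definition R2 :: "(bool list \<Rightarrow> 'w \<Rightarrow> 'a::euclidean_space) \<Rightarrow> ('a \<Rightarrow> 'a \<Rightarrow> 'a \<Rightarrow> real) \<Rightarrow> ('a \<Rightarrow> real) \<Rightarrow> ('a \<Rightarrow> real) \<Rightarrow> real \<Rightarrow> 'a \<Rightarrow> 'a \<Rightarrow> 'a \<Rightarrow> (nat \<Rightarrow> nat) \<Rightarrow> nat \<Rightarrow> 'w \<Rightarrow> real" where
  "R2 X p mu K0 \<gamma> x x0 x1 pp n \<omega> =
     (1 / real (card (Gen n))) *
     (\<Sum>i\<in>Gen (n - pp n).
        (\<Sum>k=0..pp n. 2 ^ (pp n - k) *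
            (Qop p ^^ (pp n - k)) (Pk p (ftil p mu K0 \<gamma> x x0 x1 n)) (X i \<omega>)) ^ 2)"

end

theory Submission
  imports Defs "HOL-Analysis.Analysis"
begin


lemma borel_fst[measurable (raw)]:
  fixes f :: "'m \<Rightarrow> 'a::second_countable_topology \<times> 'b::second_countable_topology"
  shows "f \<in> borel_measurable M \<Longrightarrow> (\<lambda>x. fst (f x)) \<in> borel_measurable M"
  by (rule borel_measurable_continuous_on[where f=fst]) (auto intro: continuous_intros)

lemma borel_snd[measurable (raw)]:
  fixes f :: "'m \<Rightarrow> 'a::second_countable_topology \<times> 'b::second_countable_topology"
  shows "f \<in> borel_measurable M \<Longrightarrow> (\<lambda>x. snd (f x)) \<in> borel_measurable M"
  by (rule borel_measurable_continuous_on[where f=snd]) (auto intro: continuous_intros)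

lemma borel_fst0[measurable]: "fst \<in> borel_measurable (borel :: ('a::second_countable_topology \<times> 'b::second_countable_topology) measure)"
  using borel_fst[of "\<lambda>x. x" borel] by simp
lemma borel_snd0[measurable]: "snd \<in> borel_measurable (borel :: ('a::second_countable_topology \<times> 'b::second_countable_topology) measure)"
  using borel_snd[of "\<lambda>x. x" borel] by simp

lemma meas3: fixes p :: "'a::euclidean_space \<Rightarrow> 'a \<Rightarrow> 'a \<Rightarrow> real"
  assumes p_meas: "(\<lambda>(y, y0, y1). p y y0 y1) \<in> borel_measurable borel"
  and [measurable]: "f \<in> borel_measurable M" "g \<in> borel_measurable M" "h \<in> borel_measurable M"
  shows "(\<lambda>x. p (f x) (g x) (h x)) \<in> borel_measurable M"
proof -
  have "(\<lambda>x. (f x, g x, h x)) \<in> borel_measurable M" by measurable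
  from measurable_compose[OF this p_meas] show ?thesis by simp
qed

locale setting =
  fixes p :: "'a::euclidean_space \<Rightarrow> 'a \<Rightarrow> 'a \<Rightarrow> real" and mu :: "'a \<Rightarrow> real" and C0 :: real
  assumes p_nonneg: "\<And>y y0 y1. 0 \<le> p y y0 y1"
    and p_meas: "(\<lambda>(y, y0, y1). p y y0 y1) \<in> borel_measurable borel"
    and p_prob: "\<And>y. prob_space (Pmeas p y)"
    and mu_nonneg: "\<And>y. 0 \<le> mu y"
    and mu_meas: "mu \<in> borel_measurable borel"
    and mu_prob: "prob_space (mumeas mu)"
    and H4: "\<And>y y0 y1. mu y + qdens p y y0 + p y y0 y1 \<le> C0"
begin

lemma pm[measurable (raw)]:
  "f \<in> borel_measurable M \<Longrightarrow> g \<in> borel_measurable M \<Longrightarrow> h \<in> borel_measurable M \<Longrightarrow>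
   (\<lambda>x. p (f x) (g x) (h x)) \<in> borel_measurable M"
  using meas3[OF p_meas] by blast

lemma mu_m[measurable]: "mu \<in> borel_measurable borel" by (rule mu_meas)

lemma sets_Pmeas[simp]: "sets (Pmeas p y) = sets borel"
  by (simp add: Pmeas_def)
lemma space_Pmeas[simp]: "space (Pmeas p y) = UNIV"
  by (simp add: Pmeas_def)
lemma sets_mumeas[simp]: "sets (mumeas mu) = sets borel"
  by (simp add: mumeas_def)
lemma space_mumeas[simp]: "space (mumeas mu) = UNIV"
  by (simp add: mumeas_def)

lemma qdens_nonneg: "0 \<le> qdens p y z"
  unfolding qdens_def by (auto intro!: integral_nonneg_AE mult_nonneg_nonneg simp: p_nonneg add_nonneg_nonneg)

lemma mu_le: "mu y \<le> C0" and qdens_le: "qdens p y z \<le> C0" and p_le: "p y a b \<le> C0"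
  using H4[of y z b] H4[of y a b] H4[of y z z] p_nonneg[of y z b] p_nonneg[of y a b] qdens_nonneg[of y z] qdens_nonneg[of y a] mu_nonneg[of y]
  by linarith+

lemma C0_nonneg: "0 \<le> C0" using mu_le[of 0] mu_nonneg[of 0] by linarith

lemma p_total: "(\<integral>\<^sup>+z. ennreal (p y (fst z) (snd z)) \<partial>lborel) = 1"
proof -
  interpret prob_space "Pmeas p y" by (rule p_prob)
  have "emeasure (Pmeas p y) UNIV = 1" using emeasure_space_1 by simp
  moreover have "emeasure (Pmeas p y) UNIV = (\<integral>\<^sup>+z. ennreal (p y (fst z) (snd z)) * indicator UNIV z \<partial>lborel)"
    unfolding Pmeas_def by (rule emeasure_density) simp_all
  ultimately show ?thesis by simp
qed

lemma Pk_nn_bound: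
  fixes g :: "'a \<Rightarrow> 'a \<Rightarrow> 'a \<Rightarrow> real"
  assumes [measurable]: "(\<lambda>z. g y (fst z) (snd z)) \<in> borel_measurable borel"
  shows "ennreal (norm (Pk p g y)) \<le> (\<integral>\<^sup>+z. ennreal (p y (fst z) (snd z)) * ennreal (norm (g y (fst z) (snd z))) \<partial>lborel)"
proof (cases "integrable (Pmeas p y) (\<lambda>z. g y (fst z) (snd z))")
  case True
  have "ennreal (norm (Pk p g y)) \<le> (\<integral>\<^sup>+z. ennreal (norm (g y (fst z) (snd z))) \<partial>Pmeas p y)"
    unfolding Pk_def using integral_norm_bound_ennreal[OF True] by simp
  also have "\<dots> = (\<integral>\<^sup>+z. ennreal (p y (fst z) (snd z)) * ennreal (norm (g y (fst z) (snd z))) \<partial>lborel)"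
    unfolding Pmeas_def by (rule nn_integral_density) measurable
  finally show ?thesis .
next
  case False
  then show ?thesis by (simp add: Pk_def not_integrable_integral_eq)
qed

lemma Pk_integrable:
  fixes g :: "'a \<Rightarrow> 'a \<Rightarrow> 'a \<Rightarrow> real"
  assumes [measurable]: "(\<lambda>z. g y (fst z) (snd z)) \<in> borel_measurable borel"
    and B: "\<And>a b. \<bar>g y a b\<bar> \<le> B"
  shows "integrable (Pmeas p y) (\<lambda>z. g y (fst z) (snd z))"
proof -
  interpret prob_space "Pmeas p y" by (rule p_prob)
  have "(\<lambda>z. g y (fst z) (snd z)) \<in> borel_measurable (Pmeas p y)"
    by (subst measurable_cong_sets[OF sets_Pmeas refl]) (rule assms)
  then show ?thesis by (intro integrable_const_bound[where B=B]) (auto simp: B)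
qed

lemma Pk_const[simp]: "Pk p (\<lambda>_ _ _. c) y = c"
proof -
  interpret prob_space "Pmeas p y" by (rule p_prob)
  show ?thesis unfolding Pk_def using prob_space by simp
qed

lemma Pk_abs_le:
  fixes g :: "'a \<Rightarrow> 'a \<Rightarrow> 'a \<Rightarrow> real"
  assumes [measurable]: "(\<lambda>z. g y (fst z) (snd z)) \<in> borel_measurable borel"
    and B: "\<And>a b. \<bar>g y a b\<bar> \<le> B"
  shows "\<bar>Pk p g y\<bar> \<le> B"
proof -
  interpret prob_space "Pmeas p y" by (rule p_prob)
  have "\<bar>Pk p g y\<bar> \<le> (\<integral>z. \<bar>g y (fst z) (snd z)\<bar> \<partial>Pmeas p y)"
    unfolding Pk_def by (rule integral_abs_bound)
  also have "\<dots> \<le> (\<integral>z. B \<partial>Pmeas p y)"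
    by (intro integral_mono integrable_abs Pk_integrable[of g y B, OF assms]) (auto simp: B)
  also have "\<dots> = B" using prob_space by simp
  finally show ?thesis .
qed

lemma Pk_diff_const:
  fixes g :: "'a \<Rightarrow> 'a \<Rightarrow> 'a \<Rightarrow> real"
  assumes [measurable]: "(\<lambda>z. g y (fst z) (snd z)) \<in> borel_measurable borel"
    and B: "\<And>a b. \<bar>g y a b\<bar> \<le> B"
  shows "Pk p (\<lambda>y a b. g y a b - c) y = Pk p g y - c"
proof -
  interpret prob_space "Pmeas p y" by (rule p_prob)
  have i1: "integrable (Pmeas p y) (\<lambda>z. g y (fst z) (snd z))"
    by (rule Pk_integrable[of g y B, OF assms])
  have "Pk p (\<lambda>y a b. g y a b - c) y = Pk p g y - (\<integral>z. c \<partial>Pmeas p y)"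
    unfolding Pk_def by (rule Bochner_Integration.integral_diff[OF i1 integrable_const])
  moreover have "(\<integral>z. c \<partial>Pmeas p y) = c" using prob_space by simp
  ultimately show ?thesis by simp
qed

lemma Pk_cmult: "Pk p (\<lambda>y a b. c * g y a b) y = c * Pk p g y"
  unfolding Pk_def by simp

lemma Pk_meas:
  fixes g :: "'a \<Rightarrow> 'a \<Rightarrow> 'a \<Rightarrow> real"
  assumes g_meas: "(\<lambda>(y, y0, y1). g y y0 y1) \<in> borel_measurable borel"
  shows "Pk p g \<in> borel_measurable borel"
proof -
  have gy: "(\<lambda>z. g y (fst z) (snd z)) \<in> borel_measurable borel" for y
    by (rule meas3[OF g_meas, where f="\<lambda>z. y" and g=fst and h=snd and M=borel]) (simp_all, measurable)
  have e: "Pk p g = (\<lambda>y. \<integral>z. p y (fst z) (snd z) * g y (fst z) (snd z) \<partial>lborel)"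
    unfolding Pk_def Pmeas_def
  proof (rule ext)
    fix y
    show "(\<integral>z. g y (fst z) (snd z) \<partial>density lborel (\<lambda>z. ennreal (p y (fst z) (snd z)))) = (\<integral>z. p y (fst z) (snd z) * g y (fst z) (snd z) \<partial>lborel)"
      by (subst integral_density) (simp_all add: gy p_nonneg)
  qed
  have m: "(\<lambda>(y,z). p y (fst z) (snd z) * g y (fst z) (snd z)) \<in> borel_measurable (borel \<Otimes>\<^sub>M lborel)"
  proof -
    have "(\<lambda>(y,z). p y (fst z) (snd z) * g y (fst z) (snd z)) \<in> borel_measurable (borel :: ('a \<times> 'a \<times> 'a) measure)"
      using p_meas g_meas by (simp add: case_prod_beta')
    moreover have "sets (borel \<Otimes>\<^sub>M lborel) = sets (borel :: ('a \<times> 'a \<times> 'a) measure)"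
    proof -
      have "sets (borel \<Otimes>\<^sub>M lborel) = sets (borel \<Otimes>\<^sub>M (borel :: ('a \<times> 'a) measure))"
        by (rule sets_pair_measure_cong) simp_all
      also have "\<dots> = sets (borel :: ('a \<times> 'a \<times> 'a) measure)" by (subst borel_prod) (rule refl)
      finally show ?thesis .
    qed
    ultimately show ?thesis by (simp cong: measurable_cong_sets)
  qed
  show ?thesis unfolding e
    by (rule lborel.borel_measurable_lebesgue_integral) (use m in \<open>simp add: case_prod_beta'\<close>)
qed

end

context setting begin

lemma marg_total:
  "(\<integral>\<^sup>+a. (\<integral>\<^sup>+w. ennreal (p y a w) \<partial>lborel) \<partial>lborel) = 1"
  "(\<integral>\<^sup>+a. (\<integral>\<^sup>+w. ennreal (p y w a) \<partial>lborel) \<partial>lborel) = 1"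
proof -
  have m: "(\<lambda>z. ennreal (p y (fst z) (snd z))) \<in> borel_measurable (lborel \<Otimes>\<^sub>M lborel)"
    by measurable
  have "(\<integral>\<^sup>+a. (\<integral>\<^sup>+w. ennreal (p y a w) \<partial>lborel) \<partial>lborel) = (\<integral>\<^sup>+z. ennreal (p y (fst z) (snd z)) \<partial>(lborel \<Otimes>\<^sub>M lborel))"
    using lborel.nn_integral_fst[OF m] by simp
  also have "\<dots> = 1" using p_total[of y] by (simp add: lborel_prod)
  finally show "(\<integral>\<^sup>+a. (\<integral>\<^sup>+w. ennreal (p y a w) \<partial>lborel) \<partial>lborel) = 1" .
  have "(\<integral>\<^sup>+a. (\<integral>\<^sup>+w. ennreal (p y w a) \<partial>lborel) \<partial>lborel) = (\<integral>\<^sup>+z. ennreal (p y (fst z) (snd z)) \<partial>(lborel \<Otimes>\<^sub>M lborel))"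
    using lborel_pair.nn_integral_snd[OF m] by simp
  also have "\<dots> = 1" using p_total[of y] by (simp add: lborel_prod)
  finally show "(\<integral>\<^sup>+a. (\<integral>\<^sup>+w. ennreal (p y w a) \<partial>lborel) \<partial>lborel) = 1" .
qed

lemma marg_bound:
  "AE a in lborel. (\<integral>\<^sup>+w. ennreal (p y a w) \<partial>lborel) \<le> ennreal (2 * C0) \<and>
                   (\<integral>\<^sup>+w. ennreal (p y w a) \<partial>lborel) \<le> ennreal (2 * C0)"
proof -
  have "AE a in lborel. (\<integral>\<^sup>+w. ennreal (p y a w) \<partial>lborel) \<noteq> \<infinity>"
    by (rule nn_integral_PInf_AE) (measurable, simp add: marg_total)
  moreover have "AE a in lborel. (\<integral>\<^sup>+w. ennreal (p y w a) \<partial>lborel) \<noteq> \<infinity>"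
    by (rule nn_integral_PInf_AE) (measurable, simp add: marg_total)
  ultimately show ?thesis
  proof eventually_elim
    case (elim a)
    have i1: "integrable lborel (\<lambda>w. p y a w)"
      using elim by (intro integrableI_nonneg) (auto simp: p_nonneg less_top)
    have i2: "integrable lborel (\<lambda>w. p y w a)"
      using elim by (intro integrableI_nonneg) (auto simp: p_nonneg less_top)
    have e1: "(\<integral>\<^sup>+w. ennreal (p y a w) \<partial>lborel) = ennreal (\<integral>w. p y a w \<partial>lborel)"
      by (rule nn_integral_eq_integral[OF i1]) (simp add: p_nonneg)
    have e2: "(\<integral>\<^sup>+w. ennreal (p y w a) \<partial>lborel) = ennreal (\<integral>w. p y w a \<partial>lborel)"
      by (rule nn_integral_eq_integral[OF i2]) (simp add: p_nonneg)
    have q: "qdens p y a = (1/2) * ((\<integral>w. p y a w \<partial>lborel) + (\<integral>w. p y w a \<partial>lborel))"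
      unfolding qdens_def by (simp add: Bochner_Integration.integral_add[OF i1 i2])
    have n1: "0 \<le> (\<integral>w. p y a w \<partial>lborel)" "0 \<le> (\<integral>w. p y w a \<partial>lborel)"
      by (auto intro!: integral_nonneg_AE simp: p_nonneg)
    have s: "(\<integral>w. p y a w \<partial>lborel) + (\<integral>w. p y w a \<partial>lborel) \<le> 2 * C0"
      using q qdens_le[of y a] by simp
    have "(\<integral>w. p y a w \<partial>lborel) \<le> 2 * C0"
      using s n1 by linarith
    moreover have "(\<integral>w. p y w a \<partial>lborel) \<le> 2 * C0"
      using s n1 by linarith
    ultimately
    show ?case unfolding e1 e2 by (simp add: ennreal_leI)
  qed
qed

lemma P0_bound:
  fixes u :: "'a \<Rightarrow> real"
  assumes [measurable]: "u \<in> borel_measurable borel"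
  shows "ennreal \<bar>Pk p (\<lambda>_ a _. u a) y\<bar> \<le> ennreal (2 * C0) * (\<integral>\<^sup>+a. ennreal \<bar>u a\<bar> \<partial>lborel)"
    and "ennreal \<bar>Pk p (\<lambda>_ _ b. u b) y\<bar> \<le> ennreal (2 * C0) * (\<integral>\<^sup>+a. ennreal \<bar>u a\<bar> \<partial>lborel)"
proof -
  have m1: "(\<lambda>z. ennreal (p y (fst z) (snd z)) * ennreal (norm (u (fst z)))) \<in> borel_measurable (lborel \<Otimes>\<^sub>M lborel)"
    by measurable
  have m2: "(\<lambda>z. ennreal (p y (fst z) (snd z)) * ennreal (norm (u (snd z)))) \<in> borel_measurable (lborel \<Otimes>\<^sub>M lborel)"
    by measurable
  have "ennreal \<bar>Pk p (\<lambda>_ a _. u a) y\<bar> \<le> (\<integral>\<^sup>+z. ennreal (p y (fst z) (snd z)) * ennreal (norm (u (fst z))) \<partial>lborel)"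
    using Pk_nn_bound[of "\<lambda>_ a _. u a" y] by simp
  also have "\<dots> = (\<integral>\<^sup>+z. ennreal (p y (fst z) (snd z)) * ennreal (norm (u (fst z))) \<partial>(lborel \<Otimes>\<^sub>M lborel))"
    by (simp add: lborel_prod)
  also have "\<dots> = (\<integral>\<^sup>+a. (\<integral>\<^sup>+w. ennreal (p y a w) * ennreal \<bar>u a\<bar> \<partial>lborel) \<partial>lborel)"
    using lborel.nn_integral_fst[OF m1] by simp
  also have "\<dots> = (\<integral>\<^sup>+a. (\<integral>\<^sup>+w. ennreal (p y a w) \<partial>lborel) * ennreal \<bar>u a\<bar> \<partial>lborel)"
    by (rule nn_integral_cong) (rule nn_integral_multc, measurable)
  also have "\<dots> \<le> (\<integral>\<^sup>+a. ennreal (2 * C0) * ennreal \<bar>u a\<bar> \<partial>lborel)"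
    by (rule nn_integral_mono_AE) (use marg_bound[of y] in \<open>eventually_elim, auto intro: mult_right_mono\<close>)
  also have "\<dots> = ennreal (2 * C0) * (\<integral>\<^sup>+a. ennreal \<bar>u a\<bar> \<partial>lborel)"
    by (rule nn_integral_cmult) measurable
  finally show "ennreal \<bar>Pk p (\<lambda>_ a _. u a) y\<bar> \<le> ennreal (2 * C0) * (\<integral>\<^sup>+a. ennreal \<bar>u a\<bar> \<partial>lborel)" .
  have "ennreal \<bar>Pk p (\<lambda>_ _ b. u b) y\<bar> \<le> (\<integral>\<^sup>+z. ennreal (p y (fst z) (snd z)) * ennreal (norm (u (snd z))) \<partial>lborel)"
    using Pk_nn_bound[of "\<lambda>_ _ b. u b" y] by simp
  also have "\<dots> = (\<integral>\<^sup>+z. ennreal (p y (fst z) (snd z)) * ennreal (norm (u (snd z))) \<partial>(lborel \<Otimes>\<^sub>M lborel))"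
    by (simp add: lborel_prod)
  also have "\<dots> = (\<integral>\<^sup>+a. (\<integral>\<^sup>+w. ennreal (p y w a) * ennreal \<bar>u a\<bar> \<partial>lborel) \<partial>lborel)"
    using lborel_pair.nn_integral_snd[OF m2] by simp
  also have "\<dots> = (\<integral>\<^sup>+a. (\<integral>\<^sup>+w. ennreal (p y w a) \<partial>lborel) * ennreal \<bar>u a\<bar> \<partial>lborel)"
    by (rule nn_integral_cong) (rule nn_integral_multc, measurable)
  also have "\<dots> \<le> (\<integral>\<^sup>+a. ennreal (2 * C0) * ennreal \<bar>u a\<bar> \<partial>lborel)"
    by (rule nn_integral_mono_AE) (use marg_bound[of y] in \<open>eventually_elim, auto intro: mult_right_mono\<close>)
  also have "\<dots> = ennreal (2 * C0) * (\<integral>\<^sup>+a. ennreal \<bar>u a\<bar> \<partial>lborel)"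
    by (rule nn_integral_cmult) measurable
  finally show "ennreal \<bar>Pk p (\<lambda>_ _ b. u b) y\<bar> \<le> ennreal (2 * C0) * (\<integral>\<^sup>+a. ennreal \<bar>u a\<bar> \<partial>lborel)" .
qed

lemma Q_bound:
  fixes u :: "'a \<Rightarrow> real"
  assumes [measurable]: "u \<in> borel_measurable borel"
    and I: "(\<integral>\<^sup>+a. ennreal \<bar>u a\<bar> \<partial>lborel) \<le> ennreal Ir" and I0: "0 \<le> Ir"
  shows "\<bar>Qop p u y\<bar> \<le> 2 * C0 * Ir"
proof -
  have b: "\<bar>Pk p (\<lambda>_ a _. u a) y\<bar> \<le> 2 * C0 * Ir" "\<bar>Pk p (\<lambda>_ _ b. u b) y\<bar> \<le> 2 * C0 * Ir"
  proof -
    have e: "ennreal (2 * C0 * Ir) = ennreal (2 * C0) * ennreal Ir"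
      using C0_nonneg I0 by (simp add: ennreal_mult)
    have c: "ennreal (2 * C0) * (\<integral>\<^sup>+a. ennreal \<bar>u a\<bar> \<partial>lborel) \<le> ennreal (2 * C0 * Ir)"
      unfolding e by (rule mult_left_mono[OF I]) simp
    show "\<bar>Pk p (\<lambda>_ a _. u a) y\<bar> \<le> 2 * C0 * Ir"
      using order.trans[OF P0_bound(1)[OF assms(1), of y] c] C0_nonneg I0 by simp
    show "\<bar>Pk p (\<lambda>_ _ b. u b) y\<bar> \<le> 2 * C0 * Ir"
      using order.trans[OF P0_bound(2)[OF assms(1), of y] c] C0_nonneg I0 by simp
  qed
  then show ?thesis unfolding Qop_def by (simp add: abs_le_iff)
qed

lemma mu_bound:
  fixes u :: "'a \<Rightarrow> real"
  assumes [measurable]: "u \<in> borel_measurable borel"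
    and I: "(\<integral>\<^sup>+a. ennreal \<bar>u a\<bar> \<partial>lborel) \<le> ennreal Ir" and I0: "0 \<le> Ir"
  shows "\<bar>pairing mu u\<bar> \<le> C0 * Ir"
proof (cases "integrable (mumeas mu) u")
  case True
  have "ennreal \<bar>pairing mu u\<bar> \<le> (\<integral>\<^sup>+a. ennreal (norm (u a)) \<partial>mumeas mu)"
    unfolding pairing_def using integral_norm_bound_ennreal[OF True] by simp
  also have "\<dots> = (\<integral>\<^sup>+a. ennreal (mu a) * ennreal \<bar>u a\<bar> \<partial>lborel)"
  proof -
    have m1: "(\<lambda>y. ennreal (mu y)) \<in> borel_measurable lborel" by (simp, measurable)
    have m2: "(\<lambda>a. ennreal (norm (u a))) \<in> borel_measurable lborel" by (simp, measurable)
    show ?thesis unfolding mumeas_def using nn_integral_density[OF m1 m2] by simp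
  qed
  also have "\<dots> \<le> (\<integral>\<^sup>+a. ennreal C0 * ennreal \<bar>u a\<bar> \<partial>lborel)"
    by (intro nn_integral_mono mult_right_mono) (auto simp: mu_le ennreal_leI)
  also have "\<dots> = ennreal C0 * (\<integral>\<^sup>+a. ennreal \<bar>u a\<bar> \<partial>lborel)"
    by (rule nn_integral_cmult) measurable
  also have "\<dots> \<le> ennreal (C0 * Ir)"
  proof -
    have e: "ennreal (C0 * Ir) = ennreal C0 * ennreal Ir"
      using C0_nonneg I0 by (simp add: ennreal_mult)
    show ?thesis unfolding e by (rule mult_left_mono[OF I]) simp
  qed
  finally show ?thesis using C0_nonneg I0 by simp
next
  case False
  then show ?thesis
    using I0 C0_nonneg by (simp add: pairing_def not_integrable_integral_eq)
qed

end


lemma scale_int: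
  fixes K0 :: "'a::euclidean_space \<Rightarrow> real"
  assumes [measurable]: "K0 \<in> borel_measurable borel" and h: "0 < h"
  shows "(\<integral>\<^sup>+a. ennreal \<bar>K0 (inverse h *\<^sub>R (x - a))\<bar> \<partial>lborel) = ennreal (h ^ DIM('a)) * (\<integral>\<^sup>+u. ennreal \<bar>K0 u\<bar> \<partial>lborel)"
proof -
  have hne: "- h \<noteq> 0" using h by simp
  have m: "(\<lambda>a. ennreal \<bar>K0 (inverse h *\<^sub>R (x - a))\<bar>) \<in> borel_measurable borel" by measurable
  have "(\<integral>\<^sup>+a. ennreal \<bar>K0 (inverse h *\<^sub>R (x - a))\<bar> \<partial>lborel) =
        (\<integral>\<^sup>+a. ennreal \<bar>K0 (inverse h *\<^sub>R (x - a))\<bar> \<partial>density (distr lborel borel (\<lambda>u. x + (- h) *\<^sub>R u)) (\<lambda>_. \<bar>- h\<bar> ^ DIM('a)))"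
    using lborel_affine[OF hne, of x] by simp
  also have "\<dots> = (\<integral>\<^sup>+a. \<bar>- h\<bar> ^ DIM('a) * ennreal \<bar>K0 (inverse h *\<^sub>R (x - a))\<bar> \<partial>distr lborel borel (\<lambda>u. x + (- h) *\<^sub>R u))"
    by (rule nn_integral_density) (simp_all add: m)
  also have "\<dots> = (\<integral>\<^sup>+u. \<bar>- h\<bar> ^ DIM('a) * ennreal \<bar>K0 (inverse h *\<^sub>R (x - (x + (- h) *\<^sub>R u)))\<bar> \<partial>lborel)"
    by (rule nn_integral_distr) (simp_all add: m)
  also have "\<dots> = (\<integral>\<^sup>+u. ennreal (h ^ DIM('a)) * ennreal \<bar>K0 u\<bar> \<partial>lborel)"
    using h by (intro nn_integral_cong) (simp add: ennreal_power)
  also have "\<dots> = ennreal (h ^ DIM('a)) * (\<integral>\<^sup>+u. ennreal \<bar>K0 u\<bar> \<partial>lborel)"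
    by (rule nn_integral_cmult) simp
  finally show ?thesis .
qed


lemma pair_int:
  fixes K0 :: "'a::euclidean_space \<Rightarrow> real"
  assumes [measurable]: "K0 \<in> borel_measurable borel" and h: "0 < h" and K0_int: "integrable lborel K0"
  shows "(\<integral>\<^sup>+z. ennreal \<bar>K0 (inverse h *\<^sub>R (x0 - fst z))\<bar> * ennreal \<bar>K0 (inverse h *\<^sub>R (x1 - snd z))\<bar> \<partial>lborel)
         = ennreal ((h ^ DIM('a) * (\<integral>u. \<bar>K0 u\<bar> \<partial>lborel))\<^sup>2)"
proof -
  let ?L = "\<integral>u. \<bar>K0 u\<bar> \<partial>lborel"
  have L: "(\<integral>\<^sup>+u. ennreal \<bar>K0 u\<bar> \<partial>lborel) = ennreal ?L"
    by (rule nn_integral_eq_integral) (auto intro: integrable_abs[OF K0_int])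
  have L0: "0 \<le> ?L" by (rule integral_nonneg_AE) simp
  have S: "(\<integral>\<^sup>+a. ennreal \<bar>K0 (inverse h *\<^sub>R (y - a))\<bar> \<partial>lborel) = ennreal (h ^ DIM('a) * ?L)" for y
    using scale_int[OF assms(1) h, of y] h L0 by (simp add: L ennreal_mult)
  have m: "(\<lambda>z. ennreal \<bar>K0 (inverse h *\<^sub>R (x0 - fst z))\<bar> * ennreal \<bar>K0 (inverse h *\<^sub>R (x1 - snd z))\<bar>) \<in> borel_measurable (lborel \<Otimes>\<^sub>M lborel)"
    by measurable
  have "(\<integral>\<^sup>+z. ennreal \<bar>K0 (inverse h *\<^sub>R (x0 - fst z))\<bar> * ennreal \<bar>K0 (inverse h *\<^sub>R (x1 - snd z))\<bar> \<partial>lborel)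
     = (\<integral>\<^sup>+z. ennreal \<bar>K0 (inverse h *\<^sub>R (x0 - fst z))\<bar> * ennreal \<bar>K0 (inverse h *\<^sub>R (x1 - snd z))\<bar> \<partial>(lborel \<Otimes>\<^sub>M lborel))"
    by (simp add: lborel_prod)
  also have "\<dots> = (\<integral>\<^sup>+b. (\<integral>\<^sup>+c. ennreal \<bar>K0 (inverse h *\<^sub>R (x0 - b))\<bar> * ennreal \<bar>K0 (inverse h *\<^sub>R (x1 - c))\<bar> \<partial>lborel) \<partial>lborel)"
    using lborel.nn_integral_fst[OF m] by simp
  also have "\<dots> = (\<integral>\<^sup>+b. ennreal \<bar>K0 (inverse h *\<^sub>R (x0 - b))\<bar> * ennreal (h ^ DIM('a) * ?L) \<partial>lborel)"
    by (intro nn_integral_cong) (simp add: nn_integral_cmult S)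
  also have "\<dots> = ennreal (h ^ DIM('a) * ?L) * ennreal (h ^ DIM('a) * ?L)"
    by (simp add: nn_integral_multc S)
  also have "\<dots> = ennreal ((h ^ DIM('a) * ?L)\<^sup>2)"
    using h L0 by (simp add: ennreal_mult[symmetric] power2_eq_square)
  finally show ?thesis .
qed

context setting begin

lemma fn_meas:
  fixes K0 :: "'a \<Rightarrow> real"
  assumes [measurable]: "K0 \<in> borel_measurable borel"
  shows "(\<lambda>(y, a, b). fn K0 \<gamma> x x0 x1 n y a b) \<in> borel_measurable borel"
  unfolding fn_def case_prod_beta' by measurable

lemma hn_pos: "0 < hn \<gamma> n" unfolding hn_def by simp

lemma fn_bound:
  fixes K0 :: "'a \<Rightarrow> real"
  assumes B: "\<And>u. \<bar>K0 u\<bar> \<le> B"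
  shows "\<bar>fn K0 \<gamma> x x0 x1 n y a b\<bar> \<le> hn \<gamma> n powr (- (3 * real DIM('a)) / 2) * B ^ 3"
proof -
  have B0: "0 \<le> B" using B[of 0] by linarith
  have "\<bar>K0 (inverse (hn \<gamma> n) *\<^sub>R (x - y)) * K0 (inverse (hn \<gamma> n) *\<^sub>R (x0 - a)) * K0 (inverse (hn \<gamma> n) *\<^sub>R (x1 - b))\<bar> \<le> B * B * B"
    unfolding abs_mult by (intro mult_mono B) (auto simp: B0)
  then show ?thesis unfolding fn_def abs_mult
    by (auto intro!: mult_left_mono simp: power3_eq_cube)
qed

lemma Pfn_int:
  fixes K0 :: "'a \<Rightarrow> real"
  assumes [measurable]: "K0 \<in> borel_measurable borel" and K0_int: "integrable lborel K0"
  shows "(\<integral>\<^sup>+a. ennreal \<bar>Pk p (fn K0 \<gamma> x x0 x1 n) a\<bar> \<partial>lborel)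
       \<le> ennreal (C0 * (\<integral>u. \<bar>K0 u\<bar> \<partial>lborel) ^ 3 * hn \<gamma> n powr (3 * real DIM('a) / 2))"
proof -
  let ?h = "hn \<gamma> n" and ?d = "DIM('a)"
  let ?L = "\<integral>u. \<bar>K0 u\<bar> \<partial>lborel" and ?H = "hn \<gamma> n powr (- (3 * real DIM('a)) / 2)"
  have h: "0 < ?h" by (rule hn_pos)
  have L: "(\<integral>\<^sup>+u. ennreal \<bar>K0 u\<bar> \<partial>lborel) = ennreal ?L"
    by (rule nn_integral_eq_integral) (auto intro: integrable_abs[OF K0_int])
  have L0: "0 \<le> ?L" by (rule integral_nonneg_AE) simp
  have H0: "0 \<le> ?H" by simp
  have fm: "(\<lambda>(y, a, b). fn K0 \<gamma> x x0 x1 n y a b) \<in> borel_measurable borel" by (rule fn_meas) simp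
  have pt: "ennreal \<bar>Pk p (fn K0 \<gamma> x x0 x1 n) a\<bar> \<le> ennreal (C0 * ?H * (?h ^ ?d * ?L)\<^sup>2) * ennreal \<bar>K0 (inverse ?h *\<^sub>R (x - a))\<bar>" for a
  proof -
    have ma: "(\<lambda>z. fn K0 \<gamma> x x0 x1 n a (fst z) (snd z)) \<in> borel_measurable borel"
      unfolding fn_def by measurable
    have "ennreal \<bar>Pk p (fn K0 \<gamma> x x0 x1 n) a\<bar> \<le> (\<integral>\<^sup>+z. ennreal (p a (fst z) (snd z)) * ennreal (norm (fn K0 \<gamma> x x0 x1 n a (fst z) (snd z))) \<partial>lborel)"
      using Pk_nn_bound[of "fn K0 \<gamma> x x0 x1 n" a, OF ma] by simp
    also have "\<dots> \<le> (\<integral>\<^sup>+z. ennreal (C0 * ?H * \<bar>K0 (inverse ?h *\<^sub>R (x - a))\<bar>) * (ennreal \<bar>K0 (inverse ?h *\<^sub>R (x0 - fst z))\<bar> * ennreal \<bar>K0 (inverse ?h *\<^sub>R (x1 - snd z))\<bar>) \<partial>lborel)"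
    proof (intro nn_integral_mono)
      fix z :: "'a \<times> 'a"
      have "p a (fst z) (snd z) * \<bar>fn K0 \<gamma> x x0 x1 n a (fst z) (snd z)\<bar> \<le> C0 * \<bar>fn K0 \<gamma> x x0 x1 n a (fst z) (snd z)\<bar>"
        by (intro mult_right_mono p_le) simp
      also have "\<dots> = (C0 * ?H * \<bar>K0 (inverse ?h *\<^sub>R (x - a))\<bar>) * (\<bar>K0 (inverse ?h *\<^sub>R (x0 - fst z))\<bar> * \<bar>K0 (inverse ?h *\<^sub>R (x1 - snd z))\<bar>)"
        unfolding fn_def abs_mult by simp
      finally have "ennreal (p a (fst z) (snd z) * \<bar>fn K0 \<gamma> x x0 x1 n a (fst z) (snd z)\<bar>) \<le> ennreal ((C0 * ?H * \<bar>K0 (inverse ?h *\<^sub>R (x - a))\<bar>) * (\<bar>K0 (inverse ?h *\<^sub>R (x0 - fst z))\<bar> * \<bar>K0 (inverse ?h *\<^sub>R (x1 - snd z))\<bar>))"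
        by (rule ennreal_leI)
      then show "ennreal (p a (fst z) (snd z)) * ennreal (norm (fn K0 \<gamma> x x0 x1 n a (fst z) (snd z))) \<le> ennreal (C0 * ?H * \<bar>K0 (inverse ?h *\<^sub>R (x - a))\<bar>) * (ennreal \<bar>K0 (inverse ?h *\<^sub>R (x0 - fst z))\<bar> * ennreal \<bar>K0 (inverse ?h *\<^sub>R (x1 - snd z))\<bar>)"
        using C0_nonneg p_nonneg by (simp add: ennreal_mult[symmetric])
    qed
    also have "\<dots> = ennreal (C0 * ?H * \<bar>K0 (inverse ?h *\<^sub>R (x - a))\<bar>) * ennreal ((?h ^ ?d * ?L)\<^sup>2)"
      by (subst nn_integral_cmult) (simp_all add: pair_int[OF assms(1) h K0_int])
    also have "\<dots> = ennreal (C0 * ?H * (?h ^ ?d * ?L)\<^sup>2) * ennreal \<bar>K0 (inverse ?h *\<^sub>R (x - a))\<bar>"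
      using C0_nonneg by (simp add: ennreal_mult[symmetric] mult_ac)
    finally show ?thesis .
  qed
  have "(\<integral>\<^sup>+a. ennreal \<bar>Pk p (fn K0 \<gamma> x x0 x1 n) a\<bar> \<partial>lborel) \<le> (\<integral>\<^sup>+a. ennreal (C0 * ?H * (?h ^ ?d * ?L)\<^sup>2) * ennreal \<bar>K0 (inverse ?h *\<^sub>R (x - a))\<bar> \<partial>lborel)"
    by (intro nn_integral_mono pt)
  also have "\<dots> = ennreal (C0 * ?H * (?h ^ ?d * ?L)\<^sup>2) * (ennreal (?h ^ ?d) * ennreal ?L)"
    by (subst nn_integral_cmult) (simp_all add: scale_int[OF assms(1) h] L)
  also have "\<dots> = ennreal (C0 * ?L ^ 3 * (?H * (?h ^ ?d) ^ 3))"
    using C0_nonneg L0 h by (simp add: ennreal_mult[symmetric] power2_eq_square power3_eq_cube mult_ac)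
  also have "?H * (?h ^ ?d) ^ 3 = ?h powr (3 * real ?d / 2)"
  proof -
    have "(?h ^ ?d) ^ 3 = ?h powr (3 * real ?d)"
      using h by (simp add: powr_realpow[symmetric] powr_powr power_mult[symmetric] mult.commute)
    then show ?thesis using h by (simp add: powr_add[symmetric])
  qed
  finally show ?thesis by (simp add: mult_ac)
qed

end


context setting begin

lemma Qop_cmult: "Qop p (\<lambda>y. c * f y) = (\<lambda>y. c * Qop p f y)"
proof
  fix y
  have "Pk p (\<lambda>_ a _. c * f a) y = c * Pk p (\<lambda>_ a _. f a) y"
    using Pk_cmult[of c "\<lambda>_ a _. f a" y] by simp
  moreover have "Pk p (\<lambda>_ _ b. c * f b) y = c * Pk p (\<lambda>_ _ b. f b) y"
    using Pk_cmult[of c "\<lambda>_ _ b. f b" y] by simp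
  ultimately show "Qop p (\<lambda>y. c * f y) y = c * Qop p f y"
    unfolding Qop_def by (simp add: algebra_simps add_divide_distrib)
qed

lemma Qpow_cmult: "(Qop p ^^ n) (\<lambda>y. c * f y) = (\<lambda>y. c * (Qop p ^^ n) f y)"
  by (induction n) (simp_all add: Qop_cmult)

lemma pairing_cmult: "pairing mu (\<lambda>y. c * f y) = c * pairing mu f"
  unfolding pairing_def by simp

lemma Qop_meas:
  fixes u :: "'a \<Rightarrow> real"
  assumes [measurable]: "u \<in> borel_measurable borel"
  shows "Qop p u \<in> borel_measurable borel"
proof -
  have "Pk p (\<lambda>_ a _. u a) \<in> borel_measurable borel"
    by (rule Pk_meas) (simp add: case_prod_beta', measurable)
  moreover have "Pk p (\<lambda>_ _ b. u b) \<in> borel_measurable borel"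
    by (rule Pk_meas) (simp add: case_prod_beta', measurable)
  ultimately show ?thesis unfolding Qop_def[abs_def] by measurable
qed

lemma Qpow_meas:
  fixes u :: "'a \<Rightarrow> real"
  assumes "u \<in> borel_measurable borel"
  shows "(Qop p ^^ n) u \<in> borel_measurable borel"
  by (induction n) (simp_all add: assms Qop_meas)

lemma Qop_abs_le:
  fixes u :: "'a \<Rightarrow> real"
  assumes [measurable]: "u \<in> borel_measurable borel" and S: "\<And>z. \<bar>u z\<bar> \<le> S"
  shows "\<bar>Qop p u y\<bar> \<le> S"
proof -
  have "\<bar>Pk p (\<lambda>_ a _. u a) y\<bar> \<le> S"
    by (rule Pk_abs_le) (auto simp: S)
  moreover have "\<bar>Pk p (\<lambda>_ _ b. u b) y\<bar> \<le> S"
    by (rule Pk_abs_le) (auto simp: S)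
  ultimately show ?thesis unfolding Qop_def by (simp add: abs_le_iff)
qed

lemma Qop_diff_const:
  fixes u :: "'a \<Rightarrow> real"
  assumes [measurable]: "u \<in> borel_measurable borel" and S: "\<And>z. \<bar>u z\<bar> \<le> S"
  shows "Qop p (\<lambda>y. u y - c) y = Qop p u y - c"
proof -
  have "Pk p (\<lambda>_ a _. u a - c) y = Pk p (\<lambda>_ a _. u a) y - c"
    using Pk_diff_const[of "\<lambda>_ a _. u a" y S c] S by simp
  moreover have "Pk p (\<lambda>_ _ b. u b - c) y = Pk p (\<lambda>_ _ b. u b) y - c"
    using Pk_diff_const[of "\<lambda>_ _ b. u b" y S c] S by simp
  ultimately show ?thesis unfolding Qop_def by (simp add: field_simps)
qed

end

locale geo = setting p mu C0 for p :: "'a::euclidean_space \<Rightarrow> 'a \<Rightarrow> 'a \<Rightarrow> real" and mu C0 +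
  fixes V :: "'a \<Rightarrow> real" and M0 \<alpha> :: real
  assumes V_ge: "\<And>y. 1 \<le> V y"
    and alpha: "0 < \<alpha>" "\<alpha> < 1"
    and geom: "\<And>f n y. f \<in> borel_measurable borel \<Longrightarrow> (\<forall>z. \<bar>f z\<bar> \<le> V z) \<Longrightarrow>
                 \<bar>(Qop p ^^ n) f y - pairing mu f\<bar> \<le> M0 * \<alpha> ^ n * V y"
begin

lemma geom_scaled:
  fixes f :: "'a \<Rightarrow> real"
  assumes [measurable]: "f \<in> borel_measurable borel" and S: "\<And>z. \<bar>f z\<bar> \<le> S" and S0: "0 < S"
  shows "\<bar>(Qop p ^^ n) f y - pairing mu f\<bar> \<le> M0 * \<alpha> ^ n * V y * S"
proof -
  let ?g = "\<lambda>z. (1 / S) * f z"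
  have "\<forall>z. \<bar>?g z\<bar> \<le> V z"
  proof
    fix z
    have "\<bar>?g z\<bar> \<le> 1" using S[of z] S0 by (simp add: abs_mult divide_le_eq_1)
    then show "\<bar>?g z\<bar> \<le> V z" using V_ge[of z] by linarith
  qed
  then have "\<bar>(Qop p ^^ n) ?g y - pairing mu ?g\<bar> \<le> M0 * \<alpha> ^ n * V y"
    by (intro geom) measurable
  then have "\<bar>(1 / S) * ((Qop p ^^ n) f y - pairing mu f)\<bar> \<le> M0 * \<alpha> ^ n * V y"
    unfolding Qpow_cmult pairing_cmult by (simp only: right_diff_distrib)
  then have "\<bar>(Qop p ^^ n) f y - pairing mu f\<bar> / S \<le> M0 * \<alpha> ^ n * V y"
    using S0 by (simp add: abs_mult)
  then show ?thesis using S0 by (simp add: divide_le_eq)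
qed

lemma geom_lim:
  fixes f :: "'a \<Rightarrow> real"
  assumes [measurable]: "f \<in> borel_measurable borel" and S: "\<And>z. \<bar>f z\<bar> \<le> S" and S0: "0 < S"
  shows "(\<lambda>n. (Qop p ^^ n) f y) \<longlonglongrightarrow> pairing mu f"
proof -
  have "(\<lambda>n. M0 * V y * S * \<alpha> ^ n) \<longlonglongrightarrow> M0 * V y * S * 0"
    by (intro tendsto_intros LIMSEQ_power_zero) (use alpha in auto)
  then have z: "(\<lambda>n. M0 * \<alpha> ^ n * V y * S) \<longlonglongrightarrow> 0" by (simp add: mult_ac)
  have "(\<lambda>n. (Qop p ^^ n) f y - pairing mu f) \<longlonglongrightarrow> 0"
    by (rule Lim_null_comparison[OF _ z]) (use geom_scaled[OF assms] in auto)
  then show ?thesis by (simp add: LIM_zero_iff)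
qed

lemma invariance:
  fixes f :: "'a \<Rightarrow> real"
  assumes [measurable]: "f \<in> borel_measurable borel" and S: "\<And>z. \<bar>f z\<bar> \<le> S" and S0: "0 < S"
  shows "pairing mu (Qop p f) = pairing mu f"
proof -
  have Qm: "Qop p f \<in> borel_measurable borel" by (rule Qop_meas) simp
  have QS: "\<And>z. \<bar>Qop p f z\<bar> \<le> S" by (rule Qop_abs_le) (auto simp: S)
  have l1: "(\<lambda>n. (Qop p ^^ n) (Qop p f) 0) \<longlonglongrightarrow> pairing mu (Qop p f)"
    by (rule geom_lim[OF Qm QS S0])
  have l2: "(\<lambda>n. (Qop p ^^ Suc n) f 0) \<longlonglongrightarrow> pairing mu f"
    using geom_lim[OF assms, of 0] by (rule LIMSEQ_Suc)
  have "(\<lambda>n. (Qop p ^^ n) (Qop p f) 0) = (\<lambda>n. (Qop p ^^ Suc n) f 0)"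
    by (simp add: funpow_Suc_right del: funpow.simps)
  with l1 l2 show ?thesis using LIMSEQ_unique by metis
qed

lemma term_bound:
  fixes \<phi> :: "'a \<Rightarrow> real"
  assumes Qm: "Qop p \<phi> \<in> borel_measurable borel" and QS: "\<And>z. \<bar>Qop p \<phi> z\<bar> \<le> s" and s0: "0 < s"
    and inv: "pairing mu (Qop p \<phi>) = 0" and k: "k < pn"
  shows "\<bar>2 ^ (pn - k) * (Qop p ^^ (pn - k)) \<phi> y\<bar> \<le> 2 * \<bar>M0\<bar> * s * (max 1 (2 * \<alpha>)) ^ pn * V y"
proof -
  define j where "j = pn - k - 1"
  have m: "pn - k = Suc j" using k unfolding j_def by simp
  have jle: "j \<le> pn" unfolding j_def by simp
  have e: "(Qop p ^^ (pn - k)) \<phi> = (Qop p ^^ j) (Qop p \<phi>)"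
    unfolding m by (simp add: funpow_Suc_right del: funpow.simps)
  have g: "\<bar>(Qop p ^^ j) (Qop p \<phi>) y\<bar> \<le> M0 * \<alpha> ^ j * V y * s"
    using geom_scaled[OF Qm QS s0, of j y] inv by simp
  have V0: "0 \<le> V y" using V_ge[of y] by linarith
  have a0: "0 \<le> \<alpha>" using alpha by simp
  have pw: "(2 * \<alpha>) ^ j \<le> (max 1 (2 * \<alpha>)) ^ pn"
  proof -
    have "(2 * \<alpha>) ^ j \<le> (max 1 (2 * \<alpha>)) ^ j" by (rule power_mono) (use a0 in auto)
    also have "\<dots> \<le> (max 1 (2 * \<alpha>)) ^ pn" by (rule power_increasing[OF jle]) simp
    finally show ?thesis .
  qed
  have "\<bar>2 ^ (pn - k) * (Qop p ^^ (pn - k)) \<phi> y\<bar> = 2 ^ Suc j * \<bar>(Qop p ^^ j) (Qop p \<phi>) y\<bar>"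
    unfolding e by (simp only: m abs_mult) simp
  also have "\<dots> \<le> 2 ^ Suc j * (\<bar>M0\<bar> * \<alpha> ^ j * V y * s)"
  proof (rule mult_left_mono)
    have "M0 * \<alpha> ^ j * V y * s \<le> \<bar>M0\<bar> * \<alpha> ^ j * V y * s"
      using a0 V0 s0 by (intro mult_right_mono) auto
    with g show "\<bar>(Qop p ^^ j) (Qop p \<phi>) y\<bar> \<le> \<bar>M0\<bar> * \<alpha> ^ j * V y * s" by linarith
  qed simp
  also have "\<dots> = 2 * \<bar>M0\<bar> * s * V y * (2 * \<alpha>) ^ j"
    by (simp add: power_mult_distrib)
  also have "\<dots> \<le> 2 * \<bar>M0\<bar> * s * V y * (max 1 (2 * \<alpha>)) ^ pn"
    by (rule mult_left_mono[OF pw]) (use s0 V0 in auto)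
  finally show ?thesis by (simp add: mult_ac)
qed

lemma sum_bound:
  fixes \<phi> :: "'a \<Rightarrow> real"
  assumes A: "\<And>z. \<bar>\<phi> z\<bar> \<le> A"
    and Qm: "Qop p \<phi> \<in> borel_measurable borel" and QS: "\<And>z. \<bar>Qop p \<phi> z\<bar> \<le> s" and s0: "0 < s"
    and inv: "pairing mu (Qop p \<phi>) = 0"
  shows "\<bar>\<Sum>k=0..pn. 2 ^ (pn - k) * (Qop p ^^ (pn - k)) \<phi> y\<bar>
          \<le> (A + real pn * (2 * \<bar>M0\<bar> * s * (max 1 (2 * \<alpha>)) ^ pn)) * V y"
proof -
  let ?c = "2 * \<bar>M0\<bar> * s * (max 1 (2 * \<alpha>)) ^ pn"
  have V1: "1 \<le> V y" by (rule V_ge)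
  have A0: "0 \<le> A" using A[of y] by linarith
  have "(\<Sum>k=0..pn. 2 ^ (pn - k) * (Qop p ^^ (pn - k)) \<phi> y)
      = 2 ^ (pn - pn) * (Qop p ^^ (pn - pn)) \<phi> y + (\<Sum>k=0..<pn. 2 ^ (pn - k) * (Qop p ^^ (pn - k)) \<phi> y)"
    by (rule sum.last_plus) simp
  also have "2 ^ (pn - pn) * (Qop p ^^ (pn - pn)) \<phi> y = \<phi> y" by simp
  finally have e: "(\<Sum>k=0..pn. 2 ^ (pn - k) * (Qop p ^^ (pn - k)) \<phi> y) = \<phi> y + (\<Sum>k=0..<pn. 2 ^ (pn - k) * (Qop p ^^ (pn - k)) \<phi> y)" .
  have "\<bar>\<Sum>k=0..<pn. 2 ^ (pn - k) * (Qop p ^^ (pn - k)) \<phi> y\<bar> \<le> (\<Sum>k=0..<pn. \<bar>2 ^ (pn - k) * (Qop p ^^ (pn - k)) \<phi> y\<bar>)"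
    by (rule sum_abs)
  also have "\<dots> \<le> (\<Sum>k=0..<pn. ?c * V y)"
    by (rule sum_mono) (use term_bound[OF Qm QS s0 inv] in auto)
  also have "\<dots> = real pn * ?c * V y" by simp
  finally have t: "\<bar>\<Sum>k=0..<pn. 2 ^ (pn - k) * (Qop p ^^ (pn - k)) \<phi> y\<bar> \<le> real pn * ?c * V y" .
  have "\<bar>\<phi> y\<bar> \<le> A * V y" using A[of y] A0 V1 by (metis mult_left_mono mult.right_neutral order.trans)
  with t show ?thesis unfolding e by (simp add: algebra_simps abs_le_iff) linarith?
qed

end


lemma Gen_finite: "finite (Gen k)"
proof -
  show ?thesis using finite_lists_length_eq[of "UNIV :: bool set" k] by (simp add: Gen_def)
qed

lemma Gen_card: "card (Gen k) = 2 ^ k"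
proof -
  show ?thesis using card_lists_length_eq[of "UNIV :: bool set" k] by (simp add: Gen_def)
qed

lemma Gen_Suc_sum:
  fixes f :: "bool list \<Rightarrow> 'b::comm_monoid_add"
  shows "(\<Sum>i\<in>Gen (Suc k). f i) = (\<Sum>j\<in>Gen k. f (j @ [False]) + f (j @ [True]))"
proof -
  have img: "Gen (Suc k) = (\<lambda>(j, b). j @ [b]) ` (Gen k \<times> UNIV)"
  proof
    show "Gen (Suc k) \<subseteq> (\<lambda>(j, b). j @ [b]) ` (Gen k \<times> UNIV)"
    proof
      fix i assume "i \<in> Gen (Suc k)"
      then have l: "length i = Suc k" by (simp add: Gen_def)
      then have "i = butlast i @ [last i]" by (metis append_butlast_last_id length_greater_0_conv zero_less_Suc)
      moreover have "butlast i \<in> Gen k" using l by (simp add: Gen_def)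
      ultimately show "i \<in> (\<lambda>(j, b). j @ [b]) ` (Gen k \<times> UNIV)" by (metis (no_types, lifting) SigmaI UNIV_I case_prod_conv image_eqI)
    qed
  qed (auto simp: Gen_def)
  have inj: "inj_on (\<lambda>(j, b). j @ [b]) (Gen k \<times> (UNIV :: bool set))"
    by (auto simp: inj_on_def)
  have "(\<Sum>i\<in>Gen (Suc k). f i) = (\<Sum>x\<in>Gen k \<times> UNIV. f ((\<lambda>(j, b). j @ [b]) x))"
    unfolding img by (rule sum.reindex[OF inj, unfolded comp_def])
  also have "\<dots> = (\<Sum>(j, b)\<in>Gen k \<times> UNIV. f (j @ [b]))"
    by (rule sum.cong) auto
  also have "\<dots> = (\<Sum>j\<in>Gen k. \<Sum>b\<in>UNIV. f (j @ [b]))"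
    by (rule sum.cartesian_product[symmetric])
  also have "\<dots> = (\<Sum>j\<in>Gen k. f (j @ [False]) + f (j @ [True]))"
    by (simp add: UNIV_bool add.commute)
  finally show ?thesis .
qed

locale bmcL = setting p mu C0 for p :: "'a::euclidean_space \<Rightarrow> 'a \<Rightarrow> 'a \<Rightarrow> real" and mu C0 +
  fixes M :: "'w measure" and X :: "bool list \<Rightarrow> 'w \<Rightarrow> 'a" and \<nu> :: "'a measure"
  assumes bmc: "BMC M X p \<nu>"
begin

lemma M_prob: "prob_space M" using bmc unfolding BMC_def by simp
lemma X_meas[measurable]: "X i \<in> borel_measurable M" using bmc unfolding BMC_def by simp
lemma nu_eq: "\<nu> = distr M borel (X [])" using bmc unfolding BMC_def by simp

lemma sub: "sigma_finite_subalgebra M (tree_sigma M X k)"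
proof -
  interpret prob_space M by (rule M_prob)
  have m: "(\<lambda>\<omega>. restrict (\<lambda>j. X j \<omega>) (Tr k)) \<in> measurable M (PiM (Tr k) (\<lambda>_. borel))"
    by (rule measurable_restrict) simp
  have "subalgebra M (tree_sigma M X k)"
    unfolding subalgebra_def tree_sigma_def using m by (simp add: measurable_iff_sets)
  then have "finite_measure_subalgebra M (tree_sigma M X k)"
    by (intro finite_measure_subalgebra.intro finite_measure_subalgebra_axioms.intro) unfold_locales
  then show ?thesis by (rule finite_measure_subalgebra_is_sigma_finite)
qed

lemma intb:
  fixes g :: "'a \<Rightarrow> real"
  assumes [measurable]: "g \<in> borel_measurable borel" and S: "\<And>z. \<bar>g z\<bar> \<le> S"
  shows "integrable M (\<lambda>\<omega>. g (X i \<omega>))"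
proof -
  interpret prob_space M by (rule M_prob)
  show ?thesis by (rule integrable_const_bound[where B=S]) (auto simp: S)
qed

lemma cond_step:
  fixes h :: "'a \<Rightarrow> 'a \<Rightarrow> 'a \<Rightarrow> real"
  assumes j: "j \<in> Gen k" and hm: "(\<lambda>(a, b, c). h a b c) \<in> borel_measurable borel"
    and S: "\<And>a b c. \<bar>h a b c\<bar> \<le> S"
  shows "(\<integral>\<omega>. h (X j \<omega>) (X (j @ [False]) \<omega>) (X (j @ [True]) \<omega>) \<partial>M) = (\<integral>\<omega>. Pk p h (X j \<omega>) \<partial>M)"
proof -
  interpret prob_space M by (rule M_prob)
  interpret sigma_finite_subalgebra M "tree_sigma M X k" by (rule sub)
  define g where "g = (\<lambda>i a b c. if i = j then h a b c else (1::real))"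
  have S1: "\<bar>g i a b c\<bar> \<le> max S 1" for i a b c unfolding g_def using S[of a b c] by auto
  have gm: "(\<lambda>(a, b, c). g i a b c) \<in> borel_measurable borel" for i
    by (cases "i = j") (simp_all add: g_def hm)
  have gb: "bounded (range (\<lambda>(a, b, c). g i a b c))" for i
    unfolding bounded_iff by (auto simp: case_prod_beta' intro!: exI[where x="max S 1"] S1)
  have ae: "AE \<omega> in M. real_cond_exp M (tree_sigma M X k)
              (\<lambda>\<omega>. \<Prod>i\<in>Gen k. g i (X i \<omega>) (X (i @ [False]) \<omega>) (X (i @ [True]) \<omega>)) \<omega>
            = (\<Prod>i\<in>Gen k. Pk p (g i) (X i \<omega>))"
    using bmc gm gb unfolding BMC_def by blast
  have l: "(\<lambda>\<omega>. \<Prod>i\<in>Gen k. g i (X i \<omega>) (X (i @ [False]) \<omega>) (X (i @ [True]) \<omega>))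
         = (\<lambda>\<omega>. h (X j \<omega>) (X (j @ [False]) \<omega>) (X (j @ [True]) \<omega>))"
    unfolding g_def using j by (simp add: Gen_finite)
  have r: "(\<Prod>i\<in>Gen k. Pk p (g i) (X i \<omega>)) = Pk p h (X j \<omega>)" for \<omega>
  proof -
    have "Pk p (g i) (X i \<omega>) = (if i = j then Pk p h (X j \<omega>) else 1)" for i
      by (cases "i = j") (simp_all add: g_def)
    then show ?thesis using j by (simp add: Gen_finite)
  qed
  have ae2: "AE \<omega> in M. real_cond_exp M (tree_sigma M X k) (\<lambda>\<omega>. h (X j \<omega>) (X (j @ [False]) \<omega>) (X (j @ [True]) \<omega>)) \<omega>
            = Pk p h (X j \<omega>)"
    using ae unfolding l r .
  have hx: "(\<lambda>\<omega>. h (X j \<omega>) (X (j @ [False]) \<omega>) (X (j @ [True]) \<omega>)) \<in> borel_measurable M"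
    by (rule meas3[OF hm]) simp_all
  have ih: "integrable M (\<lambda>\<omega>. h (X j \<omega>) (X (j @ [False]) \<omega>) (X (j @ [True]) \<omega>))"
    by (rule integrable_const_bound[where B=S]) (auto simp: S hx)
  have Pm: "Pk p h \<in> borel_measurable borel" by (rule Pk_meas[OF hm])
  have "(\<integral>\<omega>. h (X j \<omega>) (X (j @ [False]) \<omega>) (X (j @ [True]) \<omega>) \<partial>M)
       = (\<integral>\<omega>. real_cond_exp M (tree_sigma M X k) (\<lambda>\<omega>. h (X j \<omega>) (X (j @ [False]) \<omega>) (X (j @ [True]) \<omega>)) \<omega> \<partial>M)"
    using real_cond_exp_int(2)[OF ih] by simp
  also have "\<dots> = (\<integral>\<omega>. Pk p h (X j \<omega>) \<partial>M)"
    by (rule integral_cong_AE) (use ae2 Pm in auto)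
  finally show ?thesis .
qed

lemma nu_prob: "prob_space \<nu>"
proof -
  interpret prob_space M by (rule M_prob)
  show ?thesis unfolding nu_eq by (rule prob_space_distr) simp
qed

lemma sets_nu[simp]: "sets \<nu> = sets borel" unfolding nu_eq by simp

lemma intnu:
  fixes g :: "'a \<Rightarrow> real"
  assumes gm: "g \<in> borel_measurable borel" and S: "\<And>z. \<bar>g z\<bar> \<le> S"
  shows "integrable \<nu> g"
proof -
  interpret prob_space \<nu> by (rule nu_prob)
  have "g \<in> borel_measurable \<nu>" using gm by (simp cong: measurable_cong_sets)
  then show ?thesis by (intro integrable_const_bound[where B=S]) (auto simp: S)
qed

lemma expect_sum:
  fixes f :: "'a \<Rightarrow> real"
  assumes "f \<in> borel_measurable borel" and "\<And>z. \<bar>f z\<bar> \<le> S"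
  shows "(\<integral>\<omega>. (\<Sum>i\<in>Gen m. f (X i \<omega>)) \<partial>M) = 2 ^ m * (\<integral>z. (Qop p ^^ m) f z \<partial>\<nu>)"
  using assms
proof (induction m arbitrary: f)
  case 0
  have G0: "Gen 0 = {[]}" unfolding Gen_def by auto
  show ?case unfolding G0 nu_eq
    by (simp add: integral_distr[OF X_meas 0(1)])
next
  case (Suc m)
  note fm[measurable] = Suc.prems(1)
  note fS = Suc.prems(2)
  have Qm[measurable]: "Qop p f \<in> borel_measurable borel" by (rule Qop_meas) simp
  have QS: "\<And>z. \<bar>Qop p f z\<bar> \<le> S" by (rule Qop_abs_le) (auto simp: fS)
  have P0m[measurable]: "Pk p (\<lambda>_ a _. f a) \<in> borel_measurable borel"
    by (rule Pk_meas) (simp add: case_prod_beta', measurable)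
  have P1m[measurable]: "Pk p (\<lambda>_ _ b. f b) \<in> borel_measurable borel"
    by (rule Pk_meas) (simp add: case_prod_beta', measurable)
  have P0S: "\<bar>Pk p (\<lambda>_ a _. f a) z\<bar> \<le> S" for z by (rule Pk_abs_le) (auto simp: fS)
  have P1S: "\<bar>Pk p (\<lambda>_ _ b. f b) z\<bar> \<le> S" for z by (rule Pk_abs_le) (auto simp: fS)
  have step: "(\<integral>\<omega>. f (X (j @ [False]) \<omega>) + f (X (j @ [True]) \<omega>) \<partial>M) = (\<integral>\<omega>. 2 * Qop p f (X j \<omega>) \<partial>M)"
    if j: "j \<in> Gen m" for j
  proof -
    have c0: "(\<integral>\<omega>. f (X (j @ [False]) \<omega>) \<partial>M) = (\<integral>\<omega>. Pk p (\<lambda>_ a _. f a) (X j \<omega>) \<partial>M)"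
      using cond_step[OF j, of "\<lambda>_ a _. f a" S] fS by (simp add: case_prod_beta', measurable)
    have c1: "(\<integral>\<omega>. f (X (j @ [True]) \<omega>) \<partial>M) = (\<integral>\<omega>. Pk p (\<lambda>_ _ b. f b) (X j \<omega>) \<partial>M)"
      using cond_step[OF j, of "\<lambda>_ _ b. f b" S] fS by (simp add: case_prod_beta', measurable)
    have "(\<integral>\<omega>. f (X (j @ [False]) \<omega>) + f (X (j @ [True]) \<omega>) \<partial>M)
        = (\<integral>\<omega>. f (X (j @ [False]) \<omega>) \<partial>M) + (\<integral>\<omega>. f (X (j @ [True]) \<omega>) \<partial>M)"
      by (rule Bochner_Integration.integral_add) (rule intb[OF fm fS])+
    also have "\<dots> = (\<integral>\<omega>. Pk p (\<lambda>_ a _. f a) (X j \<omega>) + Pk p (\<lambda>_ _ b. f b) (X j \<omega>) \<partial>M)"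
      unfolding c0 c1
      by (rule Bochner_Integration.integral_add[symmetric]) (rule intb[OF _ P0S] intb[OF _ P1S], simp)+
    also have "\<dots> = (\<integral>\<omega>. 2 * Qop p f (X j \<omega>) \<partial>M)"
      by (rule Bochner_Integration.integral_cong) (simp_all add: Qop_def)
    finally show ?thesis .
  qed
  have "(\<integral>\<omega>. (\<Sum>i\<in>Gen (Suc m). f (X i \<omega>)) \<partial>M) = (\<integral>\<omega>. (\<Sum>j\<in>Gen m. f (X (j @ [False]) \<omega>) + f (X (j @ [True]) \<omega>)) \<partial>M)"
    by (simp add: Gen_Suc_sum)
  also have "\<dots> = (\<Sum>j\<in>Gen m. (\<integral>\<omega>. f (X (j @ [False]) \<omega>) + f (X (j @ [True]) \<omega>) \<partial>M))"
    by (rule Bochner_Integration.integral_sum) (intro Bochner_Integration.integrable_add intb[OF fm fS])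
  also have "\<dots> = (\<Sum>j\<in>Gen m. (\<integral>\<omega>. 2 * Qop p f (X j \<omega>) \<partial>M))"
    by (rule sum.cong) (simp_all add: step)
  also have "\<dots> = 2 * (\<integral>\<omega>. (\<Sum>j\<in>Gen m. Qop p f (X j \<omega>)) \<partial>M)"
    by (subst Bochner_Integration.integral_sum) (auto simp: sum_distrib_left intro: intb[OF Qm QS])
  also have "\<dots> = 2 * (2 ^ m * (\<integral>z. (Qop p ^^ m) (Qop p f) z \<partial>\<nu>))"
    using Suc.IH[OF Qm QS] by simp
  also have "(Qop p ^^ m) (Qop p f) = (Qop p ^^ Suc m) f"
    by (simp add: funpow_Suc_right del: funpow.simps)
  finally show ?case by simp
qed

lemma Qpow_abs_le:
  fixes u :: "'a \<Rightarrow> real"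
  assumes um: "u \<in> borel_measurable borel" and S: "\<And>z. \<bar>u z\<bar> \<le> S"
  shows "\<bar>(Qop p ^^ n) u y\<bar> \<le> S"
proof (induction n arbitrary: y)
  case 0 then show ?case using S by simp
next
  case (Suc n)
  have "\<bar>Qop p ((Qop p ^^ n) u) y\<bar> \<le> S"
    by (rule Qop_abs_le[OF Qpow_meas[OF um]]) (rule Suc.IH)
  then show ?case by simp
qed

lemma Q_mono:
  fixes u w :: "'a \<Rightarrow> real"
  assumes um[measurable]: "u \<in> borel_measurable borel" and S: "\<And>z. \<bar>u z\<bar> \<le> S"
    and le: "\<And>z. u z \<le> w z"
    and w0: "\<And>y. integrable (Pmeas p y) (\<lambda>z. w (fst z))"
    and w1: "\<And>y. integrable (Pmeas p y) (\<lambda>z. w (snd z))"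
  shows "Qop p u y \<le> Qop p w y"
proof -
  have "Pk p (\<lambda>_ a _. u a) y \<le> Pk p (\<lambda>_ a _. w a) y"
    unfolding Pk_def
    by (rule integral_mono[OF Pk_integrable[of "\<lambda>_ a _. u a" y S] w0]) (auto simp: S le)
  moreover have "Pk p (\<lambda>_ _ b. u b) y \<le> Pk p (\<lambda>_ _ b. w b) y"
    unfolding Pk_def
    by (rule integral_mono[OF Pk_integrable[of "\<lambda>_ _ b. u b" y S] w1]) (auto simp: S le)
  ultimately show ?thesis unfolding Qop_def by simp
qed

lemma expect_W:
  fixes W g :: "'a \<Rightarrow> real"
  assumes Wm[measurable]: "W \<in> borel_measurable borel" and W0: "\<And>z. 0 \<le> W z"
    and Wint0: "\<And>j y. integrable (Pmeas p y) (\<lambda>z. (Qop p ^^ j) W (fst z))"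
    and Wint1: "\<And>j y. integrable (Pmeas p y) (\<lambda>z. (Qop p ^^ j) W (snd z))"
    and gdom: "\<And>y. (Qop p ^^ m) W y \<le> g y" and gint: "integrable \<nu> g"
  shows "(\<integral>\<^sup>+\<omega>. (\<Sum>i\<in>Gen m. ennreal (W (X i \<omega>))) \<partial>M) \<le> ennreal (2 ^ m * (\<integral>z. g z \<partial>\<nu>))"
proof -
  interpret prob_space M by (rule M_prob)
  define F where "F = (\<lambda>(N::nat) z. min (W z) (real N))"
  have Fm[measurable]: "F N \<in> borel_measurable borel" for N unfolding F_def by measurable
  have FS: "\<bar>F N z\<bar> \<le> real N" for N z unfolding F_def using W0[of z] by auto
  have F0: "0 \<le> F N z" for N z unfolding F_def using W0[of z] by auto
  have mono: "(Qop p ^^ j) (F N) y \<le> (Qop p ^^ j) W y" for j N y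
  proof (induction j arbitrary: y)
    case 0 then show ?case by (simp add: F_def)
  next
    case (Suc j)
    show ?case
      using Q_mono[OF Qpow_meas[OF Fm] Qpow_abs_le[OF Fm FS] Suc.IH Wint0 Wint1] by simp
  qed
  have bnd: "(\<integral>\<^sup>+\<omega>. (\<Sum>i\<in>Gen m. ennreal (F N (X i \<omega>))) \<partial>M) \<le> ennreal (2 ^ m * (\<integral>z. g z \<partial>\<nu>))" for N
  proof -
    have "(\<integral>\<^sup>+\<omega>. (\<Sum>i\<in>Gen m. ennreal (F N (X i \<omega>))) \<partial>M) = (\<integral>\<^sup>+\<omega>. ennreal (\<Sum>i\<in>Gen m. F N (X i \<omega>)) \<partial>M)"
      by (rule nn_integral_cong) (simp add: F0)
    also have "\<dots> = ennreal (\<integral>\<omega>. (\<Sum>i\<in>Gen m. F N (X i \<omega>)) \<partial>M)"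
      by (rule nn_integral_eq_integral) (auto intro!: Bochner_Integration.integrable_sum intb[OF Fm FS] sum_nonneg F0)
    also have "(\<integral>\<omega>. (\<Sum>i\<in>Gen m. F N (X i \<omega>)) \<partial>M) = 2 ^ m * (\<integral>z. (Qop p ^^ m) (F N) z \<partial>\<nu>)"
      by (rule expect_sum[OF Fm FS])
    also have "\<dots> \<le> 2 ^ m * (\<integral>z. g z \<partial>\<nu>)"
    proof (rule mult_left_mono)
      show "(\<integral>z. (Qop p ^^ m) (F N) z \<partial>\<nu>) \<le> (\<integral>z. g z \<partial>\<nu>)"
        by (rule integral_mono[OF intnu[OF Qpow_meas[OF Fm] Qpow_abs_le[OF Fm FS]] gint])
           (rule order.trans[OF mono gdom])
    qed simp
    finally show ?thesis by (simp add: ennreal_leI)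
  qed
  have sup: "(\<Sum>i\<in>Gen m. ennreal (W (X i \<omega>))) = (SUP N. (\<Sum>i\<in>Gen m. ennreal (F N (X i \<omega>))))" for \<omega>
  proof (rule antisym)
    obtain N :: nat where N: "(\<Sum>i\<in>Gen m. W (X i \<omega>)) \<le> real N" using real_arch_simple by blast
    have "F N (X i \<omega>) = W (X i \<omega>)" if "i \<in> Gen m" for i
    proof -
      have "W (X i \<omega>) \<le> (\<Sum>i\<in>Gen m. W (X i \<omega>))"
        by (rule member_le_sum) (use that W0 Gen_finite in auto)
      then show ?thesis using N unfolding F_def by simp
    qed
    then have "(\<Sum>i\<in>Gen m. ennreal (W (X i \<omega>))) = (\<Sum>i\<in>Gen m. ennreal (F N (X i \<omega>)))"
      by (intro sum.cong) auto
    also have "\<dots> \<le> (SUP N. (\<Sum>i\<in>Gen m. ennreal (F N (X i \<omega>))))"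
      by (rule SUP_upper) simp
    finally show "(\<Sum>i\<in>Gen m. ennreal (W (X i \<omega>))) \<le> (SUP N. (\<Sum>i\<in>Gen m. ennreal (F N (X i \<omega>))))" .
    show "(SUP N. (\<Sum>i\<in>Gen m. ennreal (F N (X i \<omega>)))) \<le> (\<Sum>i\<in>Gen m. ennreal (W (X i \<omega>)))"
      by (rule SUP_least, rule sum_mono) (simp add: F_def ennreal_leI)
  qed
  have inc: "incseq (\<lambda>N \<omega>. (\<Sum>i\<in>Gen m. ennreal (F N (X i \<omega>))))"
    by (auto simp: incseq_def le_fun_def F_def intro!: sum_mono ennreal_leI)
  have "(\<integral>\<^sup>+\<omega>. (\<Sum>i\<in>Gen m. ennreal (W (X i \<omega>))) \<partial>M) = (\<integral>\<^sup>+\<omega>. (SUP N. (\<Sum>i\<in>Gen m. ennreal (F N (X i \<omega>)))) \<partial>M)"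
    by (simp add: sup)
  also have "\<dots> = (SUP N. (\<integral>\<^sup>+\<omega>. (\<Sum>i\<in>Gen m. ennreal (F N (X i \<omega>))) \<partial>M))"
    by (rule nn_integral_monotone_convergence_SUP[OF inc]) measurable
  also have "\<dots> \<le> ennreal (2 ^ m * (\<integral>z. g z \<partial>\<nu>))"
    by (rule SUP_least) (rule bnd)
  finally show ?thesis .
qed

end


context setting begin

lemma pairing_abs_le:
  fixes u :: "'a \<Rightarrow> real"
  assumes um: "u \<in> borel_measurable borel" and S: "\<And>z. \<bar>u z\<bar> \<le> S"
  shows "\<bar>pairing mu u\<bar> \<le> S"
proof -
  interpret prob_space "mumeas mu" by (rule mu_prob)
  have um': "u \<in> borel_measurable (mumeas mu)" using um by (simp cong: measurable_cong_sets)
  have ui: "integrable (mumeas mu) u" by (rule integrable_const_bound[where B=S]) (auto simp: S um')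
  have "\<bar>pairing mu u\<bar> \<le> (\<integral>z. \<bar>u z\<bar> \<partial>mumeas mu)"
    unfolding pairing_def by (rule integral_abs_bound)
  also have "\<dots> \<le> (\<integral>z. S \<partial>mumeas mu)"
    by (intro integral_mono integrable_abs ui) (auto simp: S)
  also have "\<dots> = S" using prob_space by simp
  finally show ?thesis .
qed

lemma pairing_diff_const:
  fixes u :: "'a \<Rightarrow> real"
  assumes um: "u \<in> borel_measurable borel" and S: "\<And>z. \<bar>u z\<bar> \<le> S"
  shows "pairing mu (\<lambda>y. u y - c) = pairing mu u - c"
proof -
  interpret prob_space "mumeas mu" by (rule mu_prob)
  have um': "u \<in> borel_measurable (mumeas mu)" using um by (simp cong: measurable_cong_sets)
  have ui: "integrable (mumeas mu) u" by (rule integrable_const_bound[where B=S]) (auto simp: S um')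
  have "pairing mu (\<lambda>y. u y - c) = pairing mu u - (\<integral>z. c \<partial>mumeas mu)"
    unfolding pairing_def by (rule Bochner_Integration.integral_diff[OF ui integrable_const])
  moreover have "(\<integral>z. c \<partial>mumeas mu) = c" using prob_space by simp
  ultimately show ?thesis by simp
qed

end

context geo begin

lemma T_bound:
  fixes K0 :: "'a \<Rightarrow> real"
  assumes K0m[measurable]: "K0 \<in> borel_measurable borel" and KB: "\<And>u. \<bar>K0 u\<bar> \<le> B"
    and K0_int: "integrable lborel K0"
  shows "\<bar>\<Sum>k=0..pn. 2 ^ (pn - k) * (Qop p ^^ (pn - k)) (Pk p (ftil p mu K0 \<gamma> x x0 x1 n)) y\<bar>
     \<le> (2 * (hn \<gamma> n powr (- (3 * real DIM('a)) / 2) * B ^ 3)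
        + real pn * (2 * \<bar>M0\<bar> * ((3 * C0 * C0 * (\<integral>u. \<bar>K0 u\<bar> \<partial>lborel) ^ 3 + 1) * hn \<gamma> n powr (3 * real DIM('a) / 2)) * (max 1 (2 * \<alpha>)) ^ pn)) * V y"
proof -
  let ?H = "hn \<gamma> n powr (- (3 * real DIM('a)) / 2)"
  let ?L = "\<integral>u. \<bar>K0 u\<bar> \<partial>lborel"
  let ?hp = "hn \<gamma> n powr (3 * real DIM('a) / 2)"
  define I where "I = C0 * ?L ^ 3 * ?hp"
  define u where "u = Pk p (fn K0 \<gamma> x x0 x1 n)"
  define c where "c = pairing mu u"
  define s where "s = (3 * C0 * C0 * ?L ^ 3 + 1) * ?hp"
  have L0: "0 \<le> ?L" by (rule integral_nonneg_AE) simp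
  have hp0: "0 < ?hp" using hn_pos[of \<gamma> n] by simp
  have I0: "0 \<le> I" unfolding I_def using C0_nonneg L0 hp0 by simp
  have fm: "(\<lambda>(y, a, b). fn K0 \<gamma> x x0 x1 n y a b) \<in> borel_measurable borel" by (rule fn_meas) simp
  have um[measurable]: "u \<in> borel_measurable borel" unfolding u_def by (rule Pk_meas[OF fm])
  have uS: "\<bar>u z\<bar> \<le> ?H * B ^ 3" for z
    unfolding u_def
  proof (rule Pk_abs_le)
    show "(\<lambda>za. fn K0 \<gamma> x x0 x1 n z (fst za) (snd za)) \<in> borel_measurable borel"
      unfolding fn_def by measurable
  qed (rule fn_bound[OF KB])
  have uI: "(\<integral>\<^sup>+a. ennreal \<bar>u a\<bar> \<partial>lborel) \<le> ennreal I"
    unfolding u_def I_def by (rule Pfn_int) (simp_all add: K0_int)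
  have cS: "\<bar>c\<bar> \<le> ?H * B ^ 3" unfolding c_def by (rule pairing_abs_le[OF um uS])
  have cI: "\<bar>c\<bar> \<le> C0 * I" unfolding c_def by (rule mu_bound[OF um uI I0])
  define \<phi> where "\<phi> = (\<lambda>y. u y - c)"
  have phi_eq: "Pk p (ftil p mu K0 \<gamma> x x0 x1 n) = \<phi>"
  proof
    fix y
    have "Pk p (ftil p mu K0 \<gamma> x x0 x1 n) y = Pk p (\<lambda>y a b. fn K0 \<gamma> x x0 x1 n y a b - c) y"
      unfolding ftil_def c_def u_def by simp
    also have "\<dots> = u y - c" unfolding u_def
    proof (rule Pk_diff_const)
      show "(\<lambda>z. fn K0 \<gamma> x x0 x1 n y (fst z) (snd z)) \<in> borel_measurable borel"
        unfolding fn_def by measurable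
    qed (rule fn_bound[OF KB])
    finally show "Pk p (ftil p mu K0 \<gamma> x x0 x1 n) y = \<phi> y" unfolding \<phi>_def .
  qed
  have phim[measurable]: "\<phi> \<in> borel_measurable borel" unfolding \<phi>_def by measurable
  have phiA: "\<bar>\<phi> z\<bar> \<le> 2 * (?H * B ^ 3)" for z
    unfolding \<phi>_def using uS[of z] cS by linarith
  have Qphi: "Qop p \<phi> y = Qop p u y - c" for y
    unfolding \<phi>_def by (rule Qop_diff_const[OF um uS])
  have Qm: "Qop p \<phi> \<in> borel_measurable borel" by (rule Qop_meas[OF phim])
  have QS: "\<bar>Qop p \<phi> z\<bar> \<le> s" for z
  proof -
    have "\<bar>Qop p u z\<bar> \<le> 2 * C0 * I" by (rule Q_bound[OF um uI I0])
    then have "\<bar>Qop p \<phi> z\<bar> \<le> 3 * C0 * I" using cI unfolding Qphi by linarith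
    also have "\<dots> \<le> s" unfolding s_def I_def using hp0 by (simp add: algebra_simps)
    finally show ?thesis .
  qed
  have s0: "0 < s"
  proof -
    have "0 \<le> 3 * C0 * C0 * ?L ^ 3"
      using C0_nonneg L0 by (intro mult_nonneg_nonneg zero_le_power) auto
    then have "0 < 3 * C0 * C0 * ?L ^ 3 + 1" by linarith
    then show ?thesis unfolding s_def using hp0 by (rule mult_pos_pos)
  qed
  have inv: "pairing mu (Qop p \<phi>) = 0"
  proof -
    have "pairing mu (Qop p \<phi>) = pairing mu \<phi>"
    proof (rule invariance[OF phim, where S="2 * (?H * B ^ 3) + 1"])
      have B0: "0 \<le> B" using KB[of 0] by linarith
      have A0: "0 \<le> 2 * (?H * B ^ 3)" using B0 by simp
      show "\<bar>\<phi> z\<bar> \<le> 2 * (?H * B ^ 3) + 1" for z using phiA[of z] by linarith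
      show "0 < 2 * (?H * B ^ 3) + 1" using A0 by linarith
    qed
    also have "pairing mu \<phi> = 0"
      unfolding \<phi>_def using pairing_diff_const[OF um uS, of c] c_def by simp
    finally show ?thesis .
  qed
  show ?thesis unfolding phi_eq
    using sum_bound[OF phiA Qm QS s0 inv, of pn y] unfolding s_def by simp
qed

end


lemma pow_powr: "(2 powr t) ^ n = (2::real) powr (t * real n)"
  by (simp add: powr_realpow[symmetric] powr_powr)

lemma lim_A:
  fixes \<kappa> :: real and pp :: "nat \<Rightarrow> nat"
  assumes k1: "\<kappa> < 1" and ratio: "(\<lambda>n. real (pp n) / real n) \<longlonglongrightarrow> 1"
  shows "(\<lambda>n. (2::real) powr (\<kappa> * real n - real (pp n))) \<longlonglongrightarrow> 0"
proof -
  define \<delta> where "\<delta> = (1 - \<kappa>) / 2"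
  have d0: "0 < \<delta>" unfolding \<delta>_def using k1 by simp
  have ev1: "eventually (\<lambda>n. 1 - \<delta> < real (pp n) / real n) sequentially"
    by (rule order_tendstoD(1)[OF ratio]) (use d0 in simp)
  have ev2: "eventually (\<lambda>n. (1::nat) \<le> n) sequentially" by (rule eventually_ge_at_top)
  have q: "0 < (2::real) powr (- \<delta>)" "(2::real) powr (- \<delta>) < 1"
    using d0 by (auto intro: powr_less_one)
  have z: "(\<lambda>n. ((2::real) powr (- \<delta>)) ^ n) \<longlonglongrightarrow> 0"
    by (rule LIMSEQ_power_zero) (use q in simp)
  show ?thesis
  proof (rule Lim_null_comparison[OF _ z])
    show "eventually (\<lambda>n. norm ((2::real) powr (\<kappa> * real n - real (pp n))) \<le> (2 powr (- \<delta>)) ^ n) sequentially"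
      using ev1 ev2
    proof eventually_elim
      case (elim n)
      have n0: "0 < real n" using elim by simp
      have "(1 - \<delta>) * real n < real (pp n)" using elim(1) n0 by (simp add: field_simps)
      moreover have "(1 - \<delta>) * real n = \<kappa> * real n + \<delta> * real n"
        unfolding \<delta>_def by (simp add: field_simps)
      ultimately have "\<kappa> * real n - real (pp n) \<le> - \<delta> * real n" by linarith
      then show ?case by (simp add: pow_powr)
    qed
  qed
qed

lemma lim_B:
  fixes r :: real
  assumes "0 \<le> r" "r < 1"
  shows "(\<lambda>n. real n ^ 2 * r ^ n) \<longlonglongrightarrow> 0"
proof -
  have "norm (sqrt r) < 1" using assms by simp
  from powser_times_n_limit_0[OF this] have "(\<lambda>n. real n * sqrt r ^ n) \<longlonglongrightarrow> 0" by simp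
  then have "(\<lambda>n. (real n * sqrt r ^ n) ^ 2) \<longlonglongrightarrow> 0 ^ 2" by (rule tendsto_power)
  moreover have "(real n * sqrt r ^ n) ^ 2 = real n ^ 2 * r ^ n" for n
  proof -
    have "(sqrt r ^ n) ^ 2 = (sqrt r ^ 2) ^ n" by (metis power_mult mult.commute)
    also have "sqrt r ^ 2 = r" using assms by simp
    finally show ?thesis by (simp add: power_mult_distrib)
  qed
  ultimately show ?thesis by simp
qed

lemma b_bound:
  fixes \<alpha> \<kappa> c :: real and p n :: nat
  assumes a0: "0 < \<alpha>" and pn: "p \<le> n" and c0: "0 \<le> c"
  shows "(real p * (c * 2 powr (- (\<kappa> * real n) / 2) * (max 1 (2 * \<alpha>)) ^ p))\<^sup>2 / 2 ^ p
         \<le> c\<^sup>2 * (real n ^ 2 * (max 1 (2 * \<alpha>\<^sup>2) * 2 powr (- \<kappa>)) ^ n)"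
proof -
  let ?\<beta> = "max 1 (2 * \<alpha>)" and ?\<rho> = "max 1 (2 * \<alpha>\<^sup>2)"
  have e1: "(2 powr (- (\<kappa> * real n / 2)))\<^sup>2 = (2 powr (- \<kappa>)) ^ n"
    by (simp add: pow_powr powr_add[symmetric] power2_eq_square)
  have e2: "(?\<beta> ^ p)\<^sup>2 / 2 ^ p = (?\<beta>\<^sup>2 / 2) ^ p"
  proof -
    have "(?\<beta> ^ p)\<^sup>2 = (?\<beta>\<^sup>2) ^ p" by (metis power_mult mult.commute)
    then show ?thesis by (simp add: power_divide)
  qed
  have b2: "?\<beta>\<^sup>2 / 2 \<le> ?\<rho>"
  proof (cases "2 * \<alpha> \<le> 1")
    case True then show ?thesis by simp
  next
    case False
    then have "?\<beta> = 2 * \<alpha>" by simp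
    then show ?thesis by (simp add: power2_eq_square)
  qed
  have b3: "(?\<beta>\<^sup>2 / 2) ^ p \<le> ?\<rho> ^ n"
  proof -
    have "(?\<beta>\<^sup>2 / 2) ^ p \<le> ?\<rho> ^ p" by (rule power_mono[OF b2]) simp
    also have "\<dots> \<le> ?\<rho> ^ n" by (rule power_increasing[OF pn]) simp
    finally show ?thesis .
  qed
  have pp: "real p ^ 2 \<le> real n ^ 2" using pn by (simp add: power_mono)
  have "(real p * (c * 2 powr (- (\<kappa> * real n) / 2) * ?\<beta> ^ p))\<^sup>2 / 2 ^ p
      = c\<^sup>2 * (real p ^ 2 * ((2 powr (- \<kappa>)) ^ n * ((?\<beta> ^ p)\<^sup>2 / 2 ^ p)))"
    by (simp add: power_mult_distrib e1 mult_ac)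
  also have "\<dots> = c\<^sup>2 * (real p ^ 2 * ((2 powr (- \<kappa>)) ^ n * (?\<beta>\<^sup>2 / 2) ^ p))"
    by (simp only: e2)
  also have "\<dots> \<le> c\<^sup>2 * (real n ^ 2 * ((2 powr (- \<kappa>)) ^ n * ?\<rho> ^ n))"
    by (intro mult_left_mono mult_mono pp b3) auto
  also have "\<dots> = c\<^sup>2 * (real n ^ 2 * (?\<rho> * 2 powr (- \<kappa>)) ^ n)"
    by (simp add: power_mult_distrib mult_ac)
  finally show ?thesis .
qed


theorem lemma6p3:
  fixes M :: "'w measure"
    and X :: "bool list \<Rightarrow> 'w \<Rightarrow> 'a::euclidean_space"
    and p :: "'a \<Rightarrow> 'a \<Rightarrow> 'a \<Rightarrow> real"
    and \<nu> :: "'a measure"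
    and F :: "('a \<Rightarrow> real) set"
    and mu :: "'a \<Rightarrow> real"
    and V :: "'a \<Rightarrow> real"
    and \<alpha> M0 C0 \<gamma> :: real
    and K0 :: "'a \<Rightarrow> real"
    and x x0 x1 :: 'a
    and pp :: "nat \<Rightarrow> nat"
  assumes
    \<comment> \<open>(H3) kernel with Lebesgue density p\<close>
    p_nonneg: "\<And>y y0 y1. 0 \<le> p y y0 y1"
    and p_meas: "(\<lambda>(y, y0, y1). p y y0 y1) \<in> borel_measurable borel"
    and p_prob: "\<And>y. prob_space (Pmeas p y)"
    \<comment> \<open>X is a BMC with kernel P and initial law nu\<close>
    and bmc: "BMC M X p \<nu>"
    \<comment> \<open>(H1)\<close>
    and F_meas: "F \<subseteq> borel_measurable borel"
    and F_add: "\<And>f g. f \<in> F \<Longrightarrow> g \<in> F \<Longrightarrow> (\<lambda>y. f y + g y) \<in> F"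
    and F_scale: "\<And>c f. f \<in> F \<Longrightarrow> (\<lambda>y. c * f y) \<in> F"
    and F_const: "\<And>c. (\<lambda>_. c) \<in> F"
    and F_sq: "\<And>f. f \<in> F \<Longrightarrow> (\<lambda>y. (f y)\<^sup>2) \<in> F"
    and F_nu: "\<And>f. f \<in> F \<Longrightarrow> integrable \<nu> f"
    and F_P_int: "\<And>f0 f1 y. f0 \<in> F \<Longrightarrow> f1 \<in> F \<Longrightarrow>
                     integrable (Pmeas p y) (\<lambda>z. f0 (fst z) * f1 (snd z))"
    and F_P: "\<And>f0 f1. f0 \<in> F \<Longrightarrow> f1 \<in> F \<Longrightarrow> Pk p (\<lambda>_ a b. f0 a * f1 b) \<in> F"
    \<comment> \<open>(H2) and (H3) for mu\<close>
    and mu_nonneg: "\<And>y. 0 \<le> mu y"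
    and mu_meas: "mu \<in> borel_measurable borel"
    and mu_prob: "prob_space (mumeas mu)"
    and F_mu: "\<And>f. f \<in> F \<Longrightarrow> integrable (mumeas mu) f"
    and Q_conv: "\<And>f y. f \<in> F \<Longrightarrow> (\<lambda>n. (Qop p ^^ n) f y) \<longlonglongrightarrow> pairing mu f"
    and Q_dom: "\<And>f. f \<in> F \<Longrightarrow> \<exists>g\<in>F. \<forall>n y. \<bar>(Qop p ^^ n) f y\<bar> \<le> g y"
    and V_F: "V \<in> F"
    and V_ge: "\<And>y. 1 \<le> V y"
    and alpha: "0 < \<alpha>" "\<alpha> < 1"
    and geom: "\<And>f n y. f \<in> borel_measurable borel \<Longrightarrow> (\<forall>z. \<bar>f z\<bar> \<le> V z) \<Longrightarrow>
                 \<bar>(Qop p ^^ n) f y - pairing mu f\<bar> \<le> M0 * \<alpha> ^ n * V y"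
    \<comment> \<open>(H4)\<close>
    and H4: "\<And>y y0 y1. mu y + qdens p y y0 + p y y0 y1 \<le> C0"
    \<comment> \<open>(H5)\<close>
    and gamma: "0 < \<gamma>" "\<gamma> < 1 / (3 * real DIM('a))"
    and gamma_alpha: "2 * \<alpha>\<^sup>2 < 2 powr (3 * real DIM('a) * \<gamma>)"
    and K0_meas: "K0 \<in> borel_measurable borel"
    and K0_bdd: "bounded (range K0)"
    and K0_int: "integrable lborel K0"
    and K0_one: "(\<integral>u. K0 u \<partial>lborel) = 1"
    \<comment> \<open>fixed point\<close>
    and mu_x: "0 < mu x"
    \<comment> \<open>the sequence p_n\<close>
    and pp_mono: "\<And>n. 2 \<le> n \<Longrightarrow> pp n \<le> pp (Suc n)"
    and pp_pos: "\<And>n. 2 \<le> n \<Longrightarrow> 0 < pp n"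
    and pp_lt: "\<And>n. 2 \<le> n \<Longrightarrow> pp n < n"
    and pp_ratio: "(\<lambda>n. real (pp n) / real n) \<longlonglongrightarrow> 1"
    and pp_log: "\<And>lam. 0 < lam \<Longrightarrow> filterlim (\<lambda>n. real n - real (pp n) - lam * ln (real n)) at_top sequentially"
  shows "(\<lambda>n. \<integral>\<^sup>+ \<omega>. ennreal (R2 X p mu K0 \<gamma> x x0 x1 pp n \<omega>) \<partial>M) \<longlonglongrightarrow> 0"
proof -
  have S: "setting p mu C0"
    by (rule setting.intro) (simp_all add: p_nonneg p_meas p_prob mu_nonneg mu_meas mu_prob H4)
  interpret setting p mu C0 by (rule S)
  interpret geo p mu C0 V M0 \<alpha>
    by (rule geo.intro[OF S geo_axioms.intro]) (simp_all add: V_ge alpha geom)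
  interpret bmcL p mu C0 M X \<nu>
    by (rule bmcL.intro[OF S bmcL_axioms.intro]) (rule bmc)
  obtain B where KB: "\<And>u. \<bar>K0 u\<bar> \<le> B"
    using K0_bdd unfolding bounded_iff by auto
  have B0: "0 \<le> B" using KB[of 0] by linarith
  define d where "d = real DIM('a)"
  have d1: "1 \<le> d" unfolding d_def by (simp add: DIM_positive Suc_le_eq)
  define L where "L = (\<integral>u. \<bar>K0 u\<bar> \<partial>lborel)"
  define \<kappa> where "\<kappa> = 3 * d * \<gamma>"
  have k0: "0 < \<kappa>" unfolding \<kappa>_def using d1 gamma by simp
  have k1: "\<kappa> < 1"
  proof -
    have "\<gamma> * (3 * d) < 1" using gamma d1 unfolding d_def by (simp add: field_simps)
    then show ?thesis unfolding \<kappa>_def by (simp add: mult_ac)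
  qed
  define D where "D = 3 * C0 * C0 * L ^ 3 + 1"
  define W where "W = (\<lambda>y. (V y)\<^sup>2)"
  have WF: "W \<in> F" unfolding W_def by (rule F_sq[OF V_F])
  obtain g where gF: "g \<in> F" and gd: "\<And>n y. \<bar>(Qop p ^^ n) W y\<bar> \<le> g y"
    using Q_dom[OF WF] by blast
  define G where "G = (\<integral>z. g z \<partial>\<nu>)"
  have gint: "integrable \<nu> g" by (rule F_nu[OF gF])
  have G0: "0 \<le> G" unfolding G_def
    by (rule integral_nonneg_AE) (use gd[of 0] in \<open>auto intro: order.trans[OF abs_ge_zero]\<close>)
  have QF: "Qop p f \<in> F" if fF: "f \<in> F" for f
  proof -
    have "(\<lambda>y. (1/2) * (Pk p (\<lambda>_ a b. f a * (\<lambda>_. 1) b) y + Pk p (\<lambda>_ a b. (\<lambda>_. 1) a * f b) y)) \<in> F"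
      by (intro F_scale F_add F_P fF F_const)
    moreover have "(\<lambda>y. (1/2) * (Pk p (\<lambda>_ a b. f a * (\<lambda>_. 1) b) y + Pk p (\<lambda>_ a b. (\<lambda>_. 1) a * f b) y)) = Qop p f"
      unfolding Qop_def by (rule ext) simp
    ultimately show ?thesis by simp
  qed
  have QnF: "(Qop p ^^ j) W \<in> F" for j
    by (induction j) (simp_all add: WF QF)
  have Wm[measurable]: "W \<in> borel_measurable borel" using F_meas WF by blast
  have W0: "0 \<le> W z" for z unfolding W_def by simp
  have Wint0: "integrable (Pmeas p y) (\<lambda>z. (Qop p ^^ j) W (fst z))" for j y
    using F_P_int[OF QnF[of j] F_const[of 1], of y] by simp
  have Wint1: "integrable (Pmeas p y) (\<lambda>z. (Qop p ^^ j) W (snd z))" for j y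
    using F_P_int[OF F_const[of 1] QnF[of j], of y] by simp
  have EW: "(\<integral>\<^sup>+\<omega>. (\<Sum>i\<in>Gen m. ennreal (W (X i \<omega>))) \<partial>M) \<le> ennreal (2 ^ m * G)" for m
    unfolding G_def
    by (rule expect_W[OF Wm W0 Wint0 Wint1 _ gint]) (use gd in \<open>auto intro: order.trans[OF abs_ge_self]\<close>)
  define c where "c = (\<lambda>n. 2 * (hn \<gamma> n powr (- (3 * real DIM('a)) / 2) * B ^ 3)
        + real (pp n) * (2 * \<bar>M0\<bar> * ((3 * C0 * C0 * L ^ 3 + 1) * hn \<gamma> n powr (3 * real DIM('a) / 2)) * (max 1 (2 * \<alpha>)) ^ (pp n)))"
  have L0: "0 \<le> L" unfolding L_def by (rule integral_nonneg_AE) simp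
  have c0: "0 \<le> c n" for n
    unfolding c_def using B0 C0_nonneg L0 by (intro add_nonneg_nonneg mult_nonneg_nonneg) auto
  have TB: "\<bar>\<Sum>k=0..pp n. 2 ^ (pp n - k) * (Qop p ^^ (pp n - k)) (Pk p (ftil p mu K0 \<gamma> x x0 x1 n)) y\<bar> \<le> c n * V y" for n y
    unfolding c_def L_def by (rule T_bound[OF K0_meas KB K0_int])
  have R2b: "R2 X p mu K0 \<gamma> x x0 x1 pp n \<omega> \<le> (c n)\<^sup>2 / 2 ^ n * (\<Sum>i\<in>Gen (n - pp n). W (X i \<omega>))" for n \<omega>
  proof -
    have sq: "(\<Sum>k=0..pp n. 2 ^ (pp n - k) * (Qop p ^^ (pp n - k)) (Pk p (ftil p mu K0 \<gamma> x x0 x1 n)) y)\<^sup>2 \<le> (c n)\<^sup>2 * W y" for y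
    proof -
      have "(\<Sum>k=0..pp n. 2 ^ (pp n - k) * (Qop p ^^ (pp n - k)) (Pk p (ftil p mu K0 \<gamma> x x0 x1 n)) y)\<^sup>2
          = \<bar>\<Sum>k=0..pp n. 2 ^ (pp n - k) * (Qop p ^^ (pp n - k)) (Pk p (ftil p mu K0 \<gamma> x x0 x1 n)) y\<bar>\<^sup>2"
        by simp
      also have "\<dots> \<le> (c n * V y)\<^sup>2" by (rule power_mono[OF TB]) simp
      also have "\<dots> = (c n)\<^sup>2 * W y" unfolding W_def by (simp add: power_mult_distrib)
      finally show ?thesis .
    qed
    have "R2 X p mu K0 \<gamma> x x0 x1 pp n \<omega> = (1 / 2 ^ n) * (\<Sum>i\<in>Gen (n - pp n).
        (\<Sum>k=0..pp n. 2 ^ (pp n - k) * (Qop p ^^ (pp n - k)) (Pk p (ftil p mu K0 \<gamma> x x0 x1 n)) (X i \<omega>))\<^sup>2)"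
      unfolding R2_def by (simp add: Gen_card)
    also have "\<dots> \<le> (1 / 2 ^ n) * (\<Sum>i\<in>Gen (n - pp n). (c n)\<^sup>2 * W (X i \<omega>))"
      by (intro mult_left_mono sum_mono sq) simp
    also have "\<dots> = (c n)\<^sup>2 / 2 ^ n * (\<Sum>i\<in>Gen (n - pp n). W (X i \<omega>))"
      by (simp add: sum_distrib_left)
    finally show ?thesis .
  qed
  have IB: "(\<integral>\<^sup>+\<omega>. ennreal (R2 X p mu K0 \<gamma> x x0 x1 pp n \<omega>) \<partial>M) \<le> ennreal ((c n)\<^sup>2 / 2 ^ n * (2 ^ (n - pp n) * G))" for n
  proof -
    have "(\<integral>\<^sup>+\<omega>. ennreal (R2 X p mu K0 \<gamma> x x0 x1 pp n \<omega>) \<partial>M)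
        \<le> (\<integral>\<^sup>+\<omega>. ennreal ((c n)\<^sup>2 / 2 ^ n) * (\<Sum>i\<in>Gen (n - pp n). ennreal (W (X i \<omega>))) \<partial>M)"
    proof (rule nn_integral_mono)
      fix \<omega>
      have "ennreal (R2 X p mu K0 \<gamma> x x0 x1 pp n \<omega>) \<le> ennreal ((c n)\<^sup>2 / 2 ^ n * (\<Sum>i\<in>Gen (n - pp n). W (X i \<omega>)))"
        by (rule ennreal_leI[OF R2b])
      also have "\<dots> = ennreal ((c n)\<^sup>2 / 2 ^ n) * ennreal (\<Sum>i\<in>Gen (n - pp n). W (X i \<omega>))"
        by (rule ennreal_mult') simp
      also have "ennreal (\<Sum>i\<in>Gen (n - pp n). W (X i \<omega>)) = (\<Sum>i\<in>Gen (n - pp n). ennreal (W (X i \<omega>)))"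
        using W0 by (simp add: sum_ennreal)
      finally show "ennreal (R2 X p mu K0 \<gamma> x x0 x1 pp n \<omega>) \<le> ennreal ((c n)\<^sup>2 / 2 ^ n) * (\<Sum>i\<in>Gen (n - pp n). ennreal (W (X i \<omega>)))" .
    qed
    also have "\<dots> = ennreal ((c n)\<^sup>2 / 2 ^ n) * (\<integral>\<^sup>+\<omega>. (\<Sum>i\<in>Gen (n - pp n). ennreal (W (X i \<omega>))) \<partial>M)"
      by (rule nn_integral_cmult) measurable
    also have "\<dots> \<le> ennreal ((c n)\<^sup>2 / 2 ^ n) * ennreal (2 ^ (n - pp n) * G)"
      by (rule mult_left_mono[OF EW]) simp
    also have "\<dots> = ennreal ((c n)\<^sup>2 / 2 ^ n * (2 ^ (n - pp n) * G))"
      by (simp add: ennreal_mult'[symmetric])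
    finally show ?thesis .
  qed
  define \<rho> where "\<rho> = max 1 (2 * \<alpha>\<^sup>2)"
  define r where "r = \<rho> * 2 powr (- \<kappa>)"
  have r0: "0 \<le> r" unfolding r_def \<rho>_def by simp
  have r1: "r < 1"
  proof -
    have "1 < (2::real) powr \<kappa>" using k0 by simp
    moreover have "2 * \<alpha>\<^sup>2 < 2 powr \<kappa>" using gamma_alpha unfolding \<kappa>_def d_def by simp
    ultimately have "\<rho> < 2 powr \<kappa>" unfolding \<rho>_def by simp
    then show ?thesis unfolding r_def by (simp add: powr_minus divide_less_eq field_simps)
  qed
  define bnd where "bnd = (\<lambda>n. 2 * (4 * B ^ 6 * 2 powr (\<kappa> * real n - real (pp n))) + 2 * ((2 * \<bar>M0\<bar> * D)\<^sup>2 * (real n ^ 2 * r ^ n)))"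
  have bnd_lim: "bnd \<longlonglongrightarrow> 0"
  proof -
    have "bnd \<longlonglongrightarrow> 2 * (4 * B ^ 6 * 0) + 2 * ((2 * \<bar>M0\<bar> * D)\<^sup>2 * 0)"
      unfolding bnd_def by (intro tendsto_intros lim_A[OF k1 pp_ratio] lim_B[OF r0 r1])
    then show ?thesis by simp
  qed
  have hH: "hn \<gamma> n powr (- (3 * real DIM('a)) / 2) = 2 powr (\<kappa> * real n / 2)" for n
    unfolding hn_def powr_powr \<kappa>_def d_def by (simp add: field_simps)
  have hh: "hn \<gamma> n powr (3 * real DIM('a) / 2) = 2 powr (- (\<kappa> * real n) / 2)" for n
    unfolding hn_def powr_powr \<kappa>_def d_def by (simp add: field_simps)
  have cb: "(c n)\<^sup>2 / 2 ^ pp n \<le> bnd n" if n2: "2 \<le> n" for n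
  proof -
    let ?a = "2 * (hn \<gamma> n powr (- (3 * real DIM('a)) / 2) * B ^ 3)"
    let ?b = "real (pp n) * (2 * \<bar>M0\<bar> * ((3 * C0 * C0 * L ^ 3 + 1) * hn \<gamma> n powr (3 * real DIM('a) / 2)) * (max 1 (2 * \<alpha>)) ^ (pp n))"
    have ceq: "c n = ?a + ?b" unfolding c_def ..
    have sq2: "(c n)\<^sup>2 \<le> 2 * ?a\<^sup>2 + 2 * ?b\<^sup>2"
    proof -
      have "0 \<le> (?a - ?b)\<^sup>2" by simp
      then show ?thesis unfolding ceq power2_sum power2_diff by linarith
    qed
    have pn: "pp n \<le> n" using pp_lt[OF n2] by simp
    have p2: "(2::real) ^ pp n = 2 powr real (pp n)" by (simp add: powr_realpow)
    have ea: "?a\<^sup>2 / 2 ^ pp n = 4 * B ^ 6 * 2 powr (\<kappa> * real n - real (pp n))"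
    proof -
      have "?a\<^sup>2 = 4 * B ^ 6 * (2 powr (\<kappa> * real n / 2))\<^sup>2"
        unfolding hH by (simp add: power_mult_distrib power2_eq_square power3_eq_cube mult_ac)
        (simp add: power_def)?
      also have "(2 powr (\<kappa> * real n / 2))\<^sup>2 = (2::real) powr (\<kappa> * real n)"
        by (simp add: power2_eq_square powr_add[symmetric])
      finally show ?thesis unfolding p2 by (simp add: powr_diff)
    qed
    have eb: "?b = real (pp n) * ((2 * \<bar>M0\<bar> * D) * 2 powr (- (\<kappa> * real n) / 2) * (max 1 (2 * \<alpha>)) ^ (pp n))"
      unfolding hh D_def by (simp add: mult_ac)
    have bb: "?b\<^sup>2 / 2 ^ pp n \<le> (2 * \<bar>M0\<bar> * D)\<^sup>2 * (real n ^ 2 * r ^ n)"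
      unfolding eb r_def \<rho>_def
    proof (rule b_bound[OF alpha(1) pn])
      have "0 \<le> 3 * C0 * C0 * L ^ 3"
        using C0_nonneg L0 by (intro mult_nonneg_nonneg zero_le_power) auto
      then show "0 \<le> 2 * \<bar>M0\<bar> * D" unfolding D_def by simp
    qed
    have "(c n)\<^sup>2 / 2 ^ pp n \<le> (2 * ?a\<^sup>2 + 2 * ?b\<^sup>2) / 2 ^ pp n"
      by (rule divide_right_mono[OF sq2]) simp
    also have "\<dots> = 2 * (?a\<^sup>2 / 2 ^ pp n) + 2 * (?b\<^sup>2 / 2 ^ pp n)"
      by (simp add: add_divide_distrib)
    also have "\<dots> \<le> bnd n"
      unfolding bnd_def ea using bb by linarith
    finally show ?thesis .
  qed
  define E where "E = (\<lambda>n. (c n)\<^sup>2 / 2 ^ pp n * G)"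
  have E_lim: "E \<longlonglongrightarrow> 0"
  proof -
    have "(\<lambda>n. (c n)\<^sup>2 / 2 ^ pp n) \<longlonglongrightarrow> 0"
    proof (rule tendsto_sandwich[OF _ _ tendsto_const bnd_lim])
      show "eventually (\<lambda>n. 0 \<le> (c n)\<^sup>2 / 2 ^ pp n) sequentially" by simp
      show "eventually (\<lambda>n. (c n)\<^sup>2 / 2 ^ pp n \<le> bnd n) sequentially"
        using eventually_ge_at_top[of 2] by eventually_elim (rule cb)
    qed
    then have "(\<lambda>n. (c n)\<^sup>2 / 2 ^ pp n * G) \<longlonglongrightarrow> 0 * G" by (intro tendsto_intros)
    then show ?thesis unfolding E_def by simp
  qed
  have IE: "(\<integral>\<^sup>+\<omega>. ennreal (R2 X p mu K0 \<gamma> x x0 x1 pp n \<omega>) \<partial>M) \<le> ennreal (E n)" if n2: "2 \<le> n" for n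
  proof -
    have pn: "pp n \<le> n" using pp_lt[OF n2] by simp
    have "(c n)\<^sup>2 / 2 ^ n * (2 ^ (n - pp n) * G) = E n"
    proof -
      have "(2::real) ^ n = 2 ^ (n - pp n) * 2 ^ pp n"
        using pn by (simp add: power_add[symmetric])
      then show ?thesis unfolding E_def by (simp add: field_simps)
    qed
    then show ?thesis using IB[of n] by simp
  qed
  have "(\<lambda>n. ennreal (E n)) \<longlonglongrightarrow> ennreal 0" by (rule tendsto_ennrealI[OF E_lim])
  then have El: "(\<lambda>n. ennreal (E n)) \<longlonglongrightarrow> 0" by simp
  show ?thesis
  proof (rule tendsto_sandwich[OF _ _ tendsto_const El])
    show "eventually (\<lambda>n. 0 \<le> (\<integral>\<^sup>+\<omega>. ennreal (R2 X p mu K0 \<gamma> x x0 x1 pp n \<omega>) \<partial>M)) sequentially" by simp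
    show "eventually (\<lambda>n. (\<integral>\<^sup>+\<omega>. ennreal (R2 X p mu K0 \<gamma> x x0 x1 pp n \<omega>) \<partial>M) \<le> ennreal (E n)) sequentially"
      using eventually_ge_at_top[of 2] by eventually_elim (rule IE)
  qed
qed

end
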